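(* Let $C>0$ be any fixed constant and let $p=p(n)\in[0,1]$ be a sequence of probability values. For $\Gamma\in G(n,p)$ the following hold asymptotically almost surely: (1) If $pn^2\to 0$, then $\Gamma$ has no adjacent domination pairs. (2) If $p<\frac{\log(n)+\log(\log(n))-\omega(n)}{n}$ for some sequence $\omega(n)\to+\infty$, then $\Gamma$ has at least $C$ non-adjacent domination pairs. (3) If $p<\frac{\log(n)+\log(\log(n))-\omega(n)}{n}$ for some sequence $\omega(n)\to+\infty$ and in addition $pn^2\to\infty$, then $\Gamma$ also has at least $C$ adjacent domination pairs. (4) If $\frac{\log(n)+\log(\log(n))+\omega_1(n)}{n}<p<1-\frac{\log(n)+\log(\log(n))+\omega_2(n)}{n}$ for some sequences $\omega_1(n),\omega_2(n)\to+\infty$, then $\Gamma$ has no domination pairs. (5) If $p>1-\frac{\log(n)+\log(\log(n))-\omega(n)}{n}$ for some sequence $\omega(n)\to+\infty$, then $\Gamma$ has at least $C$ adjacent domination pairs. (6) If $p>1-\frac{\log(n)+\log(\log(n))-\omega(n)}{n}$ for some sequence $\omega(n)\to+\infty$ and in addition $(1-p)n^2\to\infty$, then $\Gamma$ also has at least $C$ non-adjacent domination pairs. (7) If $(1-p)n^2\to 0$, then $\Gamma$ has no non-adjacent domination pairs.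
   Context: All graphs are finite simplicial graphs. $G(n,p)$ is the Erdős–Rényi model: the probability space of all simplicial graphs on a fixed vertex set $V$ with $|V|=n$, where each of the $\binom n2$ possible edges is present independently with probability $p=p(n)$. A property holds asymptotically almost surely (a.a.s.) if its probability tends to $1$ as $n\to\infty$. $\log$ is the natural logarithm. For a vertex $a$, $\mathrm{st}(a)$ is the set consisting of $a$ and all vertices adjacent to $a$. For distinct vertices $a,b$, $a$ dominates $b$ (written $a>b$; $(a,b)$ is a domination pair) if every vertex adjacent to $b$ is adjacent to or equal to $a$, i.e. $\mathrm{st}(b)\setminus\{b\}\subset\mathrm{st}(a)$. A domination pair $(a,b)$ is adjacent if $a$ is adjacent to $b$, and non-adjacent otherwise. *)

theory Defs
  imports "HOL-Probability.Probability"
begin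

text \<open>Vertex set of G(n,p) is {0..<n}; the potential edges are the pairs (i,j) with i<j<n.\<close>
definition pot_edges :: "nat \<Rightarrow> (nat \<times> nat) set" where
  "pot_edges n = {(i, j). i < j \<and> j < n}"

text \<open>A graph is given by its edge indicator on potential edges (False outside).
  G(n,p): each potential edge present independently with probability p.\<close>
definition Gnp :: "nat \<Rightarrow> real \<Rightarrow> (nat \<times> nat \<Rightarrow> bool) pmf" where
  "Gnp n p = Pi_pmf (pot_edges n) False (\<lambda>_. bernoulli_pmf p)"

definition adj :: "(nat \<times> nat \<Rightarrow> bool) \<Rightarrow> nat \<Rightarrow> nat \<Rightarrow> bool" where
  "adj G a b \<longleftrightarrow> a \<noteq> b \<and> G (min a b, max a b)"

definition dominates :: "nat \<Rightarrow> (nat \<times> nat \<Rightarrow> bool) \<Rightarrow> nat \<Rightarrow> nat \<Rightarrow> bool" where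
  "dominates n G a b \<longleftrightarrow> a < n \<and> b < n \<and> a \<noteq> b \<and>
     (\<forall>v<n. adj G v b \<longrightarrow> adj G v a \<or> v = a)"

definition dom_pairs :: "nat \<Rightarrow> (nat \<times> nat \<Rightarrow> bool) \<Rightarrow> (nat \<times> nat) set" where
  "dom_pairs n G = {(a, b). dominates n G a b}"

definition adj_dom_pairs :: "nat \<Rightarrow> (nat \<times> nat \<Rightarrow> bool) \<Rightarrow> (nat \<times> nat) set" where
  "adj_dom_pairs n G = {(a, b). dominates n G a b \<and> adj G a b}"

definition nonadj_dom_pairs :: "nat \<Rightarrow> (nat \<times> nat \<Rightarrow> bool) \<Rightarrow> (nat \<times> nat) set" where
  "nonadj_dom_pairs n G = {(a, b). dominates n G a b \<and> \<not> adj G a b}"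

definition aas :: "(nat \<Rightarrow> real) \<Rightarrow> (nat \<Rightarrow> (nat \<times> nat \<Rightarrow> bool) \<Rightarrow> bool) \<Rightarrow> bool" where
  "aas p Q \<longleftrightarrow> (\<lambda>n. measure_pmf.prob (Gnp n (p n)) {G. Q n G}) \<longlonglongrightarrow> 1"

end

theory Submission
  imports Defs "HOL-Real_Asymp.Real_Asymp"
begin

definition ed :: "nat \<Rightarrow> nat \<Rightarrow> nat \<times> nat" where
  "ed a b = (min a b, max a b)"

lemma prob_config:
  assumes S: "S \<subseteq> pot_edges n" and T: "T \<subseteq> pot_edges n" and ST: "S \<inter> T = {}"
    and p: "0 \<le> p" "p \<le> 1"
  shows "measure_pmf.prob (Gnp n p) {G. (\<forall>e\<in>S. G e) \<and> (\<forall>e\<in>T. \<not> G e)} = p ^ card S * (1-p) ^ card T"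
proof -
  have fin: "finite (pot_edges n)"
    by (rule finite_subset[of _ "{..<n} \<times> {..<n}"]) (auto simp: pot_edges_def)
  define B where "B e = (if e \<in> S then {True} else if e \<in> T then {False} else UNIV)" for e
  have eq: "{G. (\<forall>e\<in>S. G e) \<and> (\<forall>e\<in>T. \<not> G e)} = Pi (pot_edges n) B"
  proof (rule set_eqI)
    fix G :: "nat \<times> nat \<Rightarrow> bool"
    show "G \<in> {G. (\<forall>e\<in>S. G e) \<and> (\<forall>e\<in>T. \<not> G e)} \<longleftrightarrow> G \<in> Pi (pot_edges n) B"
    proof
      assume "G \<in> {G. (\<forall>e\<in>S. G e) \<and> (\<forall>e\<in>T. \<not> G e)}"
      then show "G \<in> Pi (pot_edges n) B" unfolding Pi_def B_def by auto
    next
      assume a: "G \<in> Pi (pot_edges n) B"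
      have "G e" if "e \<in> S" for e using Pi_mem[OF a, of e] S that by (auto simp: B_def)
      moreover have "\<not> G e" if "e \<in> T" for e using Pi_mem[OF a, of e] T ST that unfolding B_def by (cases "e \<in> S") auto
      ultimately show "G \<in> {G. (\<forall>e\<in>S. G e) \<and> (\<forall>e\<in>T. \<not> G e)}" by auto
    qed
  qed
  have "measure_pmf.prob (Gnp n p) (Pi (pot_edges n) B) = (\<Prod>e\<in>pot_edges n. measure_pmf.prob (bernoulli_pmf p) (B e))"
    unfolding Gnp_def by (rule measure_Pi_pmf_Pi[OF fin])
  also have "\<dots> = (\<Prod>e\<in>pot_edges n. (if e \<in> S then p else if e \<in> T then 1 - p else 1))"
    by (intro prod.cong refl) (use p in \<open>auto simp: B_def measure_pmf_single\<close>)
  also have "\<dots> = (\<Prod>e\<in>S. (if e \<in> S then p else if e \<in> T then 1 - p else 1)) * 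
     (\<Prod>e\<in>pot_edges n - S. (if e \<in> S then p else if e \<in> T then 1 - p else 1))"
    using S fin by (metis (no_types, lifting) prod.subset_diff mult.commute)
  also have "(\<Prod>e\<in>S. (if e \<in> S then p else if e \<in> T then 1 - p else 1)) = p ^ card S"
    by simp
  also have "(\<Prod>e\<in>pot_edges n - S. (if e \<in> S then p else if e \<in> T then 1 - p else 1)) = 
     (\<Prod>e\<in>pot_edges n - S. (if e \<in> T then 1 - p else 1))"
    by (intro prod.cong) auto
  also have "\<dots> = (\<Prod>e\<in>T. 1 - p)"
  proof -
    have "(pot_edges n - S) \<inter> T = T" using T ST by blast
    then show ?thesis using fin by (subst prod.If_cases) auto
  qed
  finally show ?thesis using eq by simp
qed

lemma ed_sym: "ed a b = ed b a" by (auto simp: ed_def)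

lemma ed_in: "a < n \<Longrightarrow> b < n \<Longrightarrow> a \<noteq> b \<Longrightarrow> ed a b \<in> pot_edges n"
  by (auto simp: ed_def pot_edges_def min_def max_def)

lemma ed_eq_iff: "a \<noteq> b \<Longrightarrow> (ed a b = ed c d) \<longleftrightarrow> (a = c \<and> b = d \<or> a = d \<and> b = c)"
  by (auto simp: ed_def min_def max_def split: if_splits)

lemma ed_eq_cases: "ed a b = ed c d \<Longrightarrow> (a = c \<and> b = d) \<or> (a = d \<and> b = c)"
  unfolding ed_def by (cases "a \<le> b"; cases "c \<le> d") (auto simp: min_def max_def)

lemma adj_ed: "adj G a b \<longleftrightarrow> a \<noteq> b \<and> G (ed a b)"
  by (simp add: adj_def ed_def)

lemma fin_E: "finite (pot_edges n)"
  by (rule finite_subset[of _ "{..<n} \<times> {..<n}"]) (auto simp: pot_edges_def)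

lemma card_E: "real (card (pot_edges n)) \<le> real n ^ 2"
proof -
  have "card (pot_edges n) \<le> card ({..<n} \<times> {..<n})"
    by (rule card_mono) (auto simp: pot_edges_def)
  then show ?thesis unfolding power2_eq_square of_nat_mult[symmetric] of_nat_le_iff by simp
qed

definition star :: "nat \<Rightarrow> nat set \<Rightarrow> (nat \<times> nat) set" where
  "star b W = (\<lambda>w. ed b w) ` W"

lemma card_star: "b \<notin> W \<Longrightarrow> card (star b W) = card W"
  unfolding star_def
  by (rule card_image) (auto simp: inj_on_def dest: ed_eq_cases)

lemma star_E: "b < n \<Longrightarrow> W \<subseteq> {..<n} \<Longrightarrow> b \<notin> W \<Longrightarrow> star b W \<subseteq> pot_edges n"
  unfolding star_def by (auto intro!: ed_in)

lemma star_disj: "b \<noteq> b' \<Longrightarrow> b \<notin> W \<Longrightarrow> b' \<notin> W \<Longrightarrow> star b W \<inter> star b' W' = {}"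
  unfolding star_def by (auto dest: ed_eq_cases)

lemma star_disj2: "b \<notin> W \<Longrightarrow> W \<inter> W' = {} \<Longrightarrow> star b W \<inter> star b W' = {}"
  unfolding star_def by (auto dest!: ed_eq_cases)

lemma mem_star: "b \<notin> W \<Longrightarrow> ed b v \<in> star b W \<longleftrightarrow> v \<in> W"
  unfolding star_def by (auto dest: ed_eq_cases)

lemma finite_star: "finite W \<Longrightarrow> finite (star b W)"
  unfolding star_def by simp

lemma prob_mono: "A \<subseteq> B \<Longrightarrow> measure_pmf.prob M A \<le> measure_pmf.prob M B"
  by (rule measure_pmf.finite_measure_mono) auto

lemma prob_union_bound:
  "finite I \<Longrightarrow> measure_pmf.prob M (\<Union>i\<in>I. A i) \<le> (\<Sum>i\<in>I. measure_pmf.prob M (A i))"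
  by (rule measure_pmf.finite_measure_subadditive_finite) auto

lemma prob_disj_union:
  "finite I \<Longrightarrow> disjoint_family_on A I \<Longrightarrow> measure_pmf.prob M (\<Union>i\<in>I. A i) = (\<Sum>i\<in>I. measure_pmf.prob M (A i))"
  by (rule measure_pmf.finite_measure_finite_Union) auto

lemma prob_config_le:
  assumes "X \<subseteq> {G. (\<forall>e\<in>S. G e) \<and> (\<forall>e\<in>T. \<not> G e)}"
    and "S \<subseteq> pot_edges n" "T \<subseteq> pot_edges n" "S \<inter> T = {}" "0 \<le> p" "p \<le> 1"
  shows "measure_pmf.prob (Gnp n p) X \<le> p ^ card S * (1-p) ^ card T"
  using prob_mono[OF assms(1), of "Gnp n p"] prob_config[OF assms(2-6)] by simp

lemma second_moment:
  fixes M :: "'a pmf" and A :: "'i \<Rightarrow> 'a set"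
  assumes fin: "finite I"
    and mu: "\<mu> = (\<Sum>i\<in>I. measure_pmf.prob M (A i))"
    and beta: "\<And>i j. i \<in> I \<Longrightarrow> j \<in> I \<Longrightarrow> i \<noteq> j \<Longrightarrow> measure_pmf.prob M (A i \<inter> A j) \<le> \<beta>"
    and c: "c < \<mu>"
  shows "measure_pmf.prob M {x. real (card {i\<in>I. x \<in> A i}) < c}
     \<le> (\<mu> + real (card I) * (real (card I) - 1) * \<beta> - \<mu>\<^sup>2) / (\<mu> - c)\<^sup>2"
proof -
  define f where "f x = (\<Sum>i\<in>I. indicator (A i) x :: real)" for x
  have f_card: "f x = real (card {i\<in>I. x \<in> A i})" for x
    unfolding f_def using fin by (simp add: indicator_def sum.If_cases Int_def conj_commute)
  have intI: "integrable (measure_pmf M) (indicator B :: 'a \<Rightarrow> real)" for B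
    by (rule measure_pmf.integrable_const_bound[where B=1]) (auto simp: indicator_def)
  have intf: "integrable (measure_pmf M) f" unfolding f_def using intI by auto
  have Ef: "measure_pmf.expectation M f = \<mu>"
    unfolding f_def mu using intI by (subst Bochner_Integration.integral_sum) auto
  have f2: "(f x)\<^sup>2 = (\<Sum>i\<in>I. \<Sum>j\<in>I. indicator (A i \<inter> A j) x)" for x
    unfolding f_def power2_eq_square sum_product by (intro sum.cong refl) (auto simp: indicator_def)
  have intf2: "integrable (measure_pmf M) (\<lambda>x. (f x)\<^sup>2)" unfolding f2 using intI by auto
  have Ef2: "measure_pmf.expectation M (\<lambda>x. (f x)\<^sup>2) = (\<Sum>i\<in>I. \<Sum>j\<in>I. measure_pmf.prob M (A i \<inter> A j))"
    unfolding f2 using intI by (simp add: Bochner_Integration.integral_sum)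
  also have "\<dots> \<le> (\<Sum>i\<in>I. measure_pmf.prob M (A i) + (real (card I) - 1) * \<beta>)"
  proof (rule sum_mono)
    fix i assume i: "i \<in> I"
    have "(\<Sum>j\<in>I. measure_pmf.prob M (A i \<inter> A j)) = measure_pmf.prob M (A i \<inter> A i) + (\<Sum>j\<in>I-{i}. measure_pmf.prob M (A i \<inter> A j))"
      using fin i by (simp add: sum.remove)
    also have "(\<Sum>j\<in>I-{i}. measure_pmf.prob M (A i \<inter> A j)) \<le> (\<Sum>j\<in>I-{i}. \<beta>)"
      using i by (intro sum_mono beta) auto
    also have "(\<Sum>j\<in>I-{i}. \<beta>) = (real (card I) - 1) * \<beta>"
    proof -
      have cI: "card (I - {i}) = card I - 1" by (simp add: card_Diff_singleton fin i)
      have "card I \<ge> 1" using fin i by (auto simp: Suc_le_eq card_gt_0_iff)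
      then show ?thesis using cI by (simp add: of_nat_diff)
    qed
    finally show "(\<Sum>j\<in>I. measure_pmf.prob M (A i \<inter> A j)) \<le> measure_pmf.prob M (A i) + (real (card I) - 1) * \<beta>"
      by simp
  qed
  also have "\<dots> = \<mu> + real (card I) * (real (card I) - 1) * \<beta>"
    by (simp add: mu sum.distrib)
  finally have Ef2le: "measure_pmf.expectation M (\<lambda>x. (f x)\<^sup>2) \<le> \<mu> + real (card I) * (real (card I) - 1) * \<beta>" .
  have var: "measure_pmf.expectation M (\<lambda>x. (f x - \<mu>)\<^sup>2) = measure_pmf.expectation M (\<lambda>x. (f x)\<^sup>2) - \<mu>\<^sup>2"
  proof -
    have "(\<lambda>x. (f x - \<mu>)\<^sup>2) = (\<lambda>x. (f x)\<^sup>2 - 2 * \<mu> * f x + \<mu>\<^sup>2)"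
      by (auto simp: power2_eq_square algebra_simps)
    then show ?thesis using intf intf2 Ef
      by (simp add: Bochner_Integration.integral_diff Bochner_Integration.integral_add power2_eq_square)
  qed
  have intv: "integrable (measure_pmf M) (\<lambda>x. (f x - \<mu>)\<^sup>2)"
  proof -
    have "(\<lambda>x. (f x - \<mu>)\<^sup>2) = (\<lambda>x. (f x)\<^sup>2 - 2 * \<mu> * f x + \<mu>\<^sup>2)"
      by (auto simp: power2_eq_square algebra_simps)
    then show ?thesis using intf intf2 by simp
  qed
  have pos: "0 < (\<mu> - c)\<^sup>2" using c by simp
  have sub: "{x. real (card {i\<in>I. x \<in> A i}) < c} \<subseteq> {x \<in> space (measure_pmf M). (\<mu> - c)\<^sup>2 \<le> (f x - \<mu>)\<^sup>2}"
  proof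
    fix x assume "x \<in> {x. real (card {i\<in>I. x \<in> A i}) < c}"
    then have "f x < c" by (simp add: f_card)
    then have "\<mu> - c \<le> \<bar>f x - \<mu>\<bar>" using c by linarith
    then have "(\<mu> - c)\<^sup>2 \<le> (f x - \<mu>)\<^sup>2" using c
      by (metis abs_le_square_iff abs_of_nonneg diff_ge_0_iff_ge less_le)
    then show "x \<in> {x \<in> space (measure_pmf M). (\<mu> - c)\<^sup>2 \<le> (f x - \<mu>)\<^sup>2}" by simp
  qed
  have "measure_pmf.prob M {x. real (card {i\<in>I. x \<in> A i}) < c} \<le>
        measure_pmf.prob M {x \<in> space (measure_pmf M). (\<mu> - c)\<^sup>2 \<le> (f x - \<mu>)\<^sup>2}"
    by (rule prob_mono[OF sub])
  also have "\<dots> \<le> measure_pmf.expectation M (\<lambda>x. (f x - \<mu>)\<^sup>2) / (\<mu> - c)\<^sup>2"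
    by (rule integral_Markov_inequality_measure[OF intv _ _ pos]) auto
  also have "\<dots> \<le> (\<mu> + real (card I) * (real (card I) - 1) * \<beta> - \<mu>\<^sup>2) / (\<mu> - c)\<^sup>2"
    using Ef2le pos unfolding var by (intro divide_right_mono) auto
  finally show ?thesis .
qed

definition isol :: "nat \<Rightarrow> (nat \<times> nat \<Rightarrow> bool) \<Rightarrow> nat \<Rightarrow> bool" where
  "isol n G b \<longleftrightarrow> (\<forall>w<n. w \<noteq> b \<longrightarrow> \<not> G (ed b w))"

definition leaf :: "nat \<Rightarrow> (nat \<times> nat \<Rightarrow> bool) \<Rightarrow> nat \<Rightarrow> bool" where
  "leaf n G b \<longleftrightarrow> (\<exists>v<n. v \<noteq> b \<and> G (ed b v) \<and> (\<forall>w<n. w \<noteq> b \<and> w \<noteq> v \<longrightarrow> \<not> G (ed b w)))"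

lemma mem_star_other: "b' \<noteq> b \<Longrightarrow> b \<notin> W \<Longrightarrow> b' \<notin> W \<Longrightarrow> ed b' v \<notin> star b W"
  unfolding star_def by (auto dest!: ed_eq_cases)

lemma card_minus2: "b < n \<Longrightarrow> v < n \<Longrightarrow> b \<noteq> v \<Longrightarrow> card ({..<n} - {b, v}) = n - 2"
  by (subst card_Diff_subset) auto

lemma card_minus1: "b < n \<Longrightarrow> card ({..<n} - {b}) = n - 1"
  by (subst card_Diff_subset) auto

lemma card_minus3: "card ({..<n} - {b, b', v}) \<ge> n - 3"
proof -
  have "card {b, b', v} \<le> 3" using card_length[of "[b,b',v]"] by simp
  moreover have "card {..<n} - card {b, b', v} \<le> card ({..<n} - {b, b', v})" by (rule diff_card_le_card_Diff) auto
  ultimately show ?thesis by simp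
qed

lemma P_iso:
  assumes "b < n" "0 \<le> p" "p \<le> 1"
  shows "measure_pmf.prob (Gnp n p) {G. isol n G b} = (1-p) ^ (n-1)"
proof -
  have "{G. isol n G b} = {G. (\<forall>e\<in>{}. G e) \<and> (\<forall>e\<in>star b ({..<n} - {b}). \<not> G e)}"
    by (auto simp: isol_def star_def)
  also have "measure_pmf.prob (Gnp n p) \<dots> = p ^ card ({}::(nat\<times>nat) set) * (1-p) ^ card (star b ({..<n} - {b}))"
    by (rule prob_config) (use assms star_E[of b n "{..<n} - {b}"] in auto)
  finally show ?thesis using assms by (simp add: card_star card_minus1)
qed

lemma P_leaf:
  assumes "b < n" "0 \<le> p" "p \<le> 1"
  shows "measure_pmf.prob (Gnp n p) {G. leaf n G b} = real (n-1) * p * (1-p) ^ (n-2)"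
proof -
  define A where "A v = {G. (\<forall>e\<in>{ed b v}. G e) \<and> (\<forall>e\<in>star b ({..<n} - {b, v}). \<not> G e)}" for v
  have "{G. leaf n G b} = (\<Union>v\<in>{..<n} - {b}. A v)"
    by (auto simp: leaf_def star_def A_def)
  also have "measure_pmf.prob (Gnp n p) \<dots> = (\<Sum>v\<in>{..<n} - {b}. measure_pmf.prob (Gnp n p) (A v))"
  proof (rule prob_disj_union)
    show "disjoint_family_on A ({..<n} - {b})"
      unfolding disjoint_family_on_def
    proof (intro ballI impI)
      fix v v' assume v: "v \<in> {..<n} - {b}" and v': "v' \<in> {..<n} - {b}" and vv: "v \<noteq> v'"
      have "ed b v' \<in> star b ({..<n} - {b, v})" using v v' vv by (subst mem_star) auto
      then show "A v \<inter> A v' = {}" unfolding A_def by auto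
    qed
  qed auto
  also have "\<dots> = (\<Sum>v\<in>{..<n} - {b}. p * (1-p) ^ (n-2))"
  proof (rule sum.cong)
    fix v assume v: "v \<in> {..<n} - {b}"
    have "measure_pmf.prob (Gnp n p) (A v) = p ^ card {ed b v} * (1-p) ^ card (star b ({..<n} - {b, v}))"
      unfolding A_def
      by (rule prob_config) (use assms v star_E[of b n "{..<n} - {b, v}"] in \<open>auto intro!: ed_in simp: mem_star\<close>)
    then show "measure_pmf.prob (Gnp n p) (A v) = p * (1-p) ^ (n-2)"
      using v assms by (simp add: card_star card_minus2 del: One_nat_def)
  qed simp
  finally show ?thesis using assms by (simp add: card_minus1)
qed

lemma P_iso2:
  assumes "b < n" "b' < n" "b \<noteq> b'" "0 \<le> p" "p \<le> 1"
  shows "measure_pmf.prob (Gnp n p) ({G. isol n G b} \<inter> {G. isol n G b'}) \<le> (1-p) ^ (2 * (n-2))"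
proof -
  define T where "T = star b ({..<n} - {b, b'}) \<union> star b' ({..<n} - {b, b'})"
  have "measure_pmf.prob (Gnp n p) ({G. isol n G b} \<inter> {G. isol n G b'}) \<le> p ^ card ({}::(nat\<times>nat) set) * (1-p) ^ card T"
    by (rule prob_config_le) (use assms star_E[of b n "{..<n} - {b, b'}"] star_E[of b' n "{..<n} - {b, b'}"] in \<open>auto simp: T_def isol_def star_def\<close>)
  moreover have "card T = 2 * (n-2)"
    unfolding T_def using assms star_disj[of b b' "{..<n} - {b, b'}" "{..<n} - {b, b'}"]
    by (subst card_Un_disjoint) (auto simp: finite_star card_star card_minus2)
  ultimately show ?thesis by simp
qed

lemma P_leaf2:
  assumes "b < n" "b' < n" "b \<noteq> b'" "0 \<le> p" "p \<le> 1"
  shows "measure_pmf.prob (Gnp n p) ({G. leaf n G b} \<inter> {G. leaf n G b'}) \<le> (p + real (n-1)^2 * p^2) * (1-p) ^ (2 * (n-3))"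
proof -
  define V where "V = {..<n}"
  define S where "S vv = {ed b (fst vv), ed b' (snd vv)}" for vv
  define T where "T vv = star b (V - {b, b', fst vv}) \<union> star b' (V - {b, b', snd vv})" for vv
  define A where "A vv = {G. (\<forall>e\<in>S vv. G e) \<and> (\<forall>e\<in>T vv. \<not> G e)}" for vv
  define I where "I = (V - {b}) \<times> (V - {b'})"
  have sub: "{G. leaf n G b} \<inter> {G. leaf n G b'} \<subseteq> (\<Union>vv\<in>I. A vv)"
  proof
    fix G assume "G \<in> {G. leaf n G b} \<inter> {G. leaf n G b'}"
    then obtain v v' where v: "v < n" "v \<noteq> b" "G (ed b v)" "\<forall>w<n. w \<noteq> b \<and> w \<noteq> v \<longrightarrow> \<not> G (ed b w)"
      and v': "v' < n" "v' \<noteq> b'" "G (ed b' v')" "\<forall>w<n. w \<noteq> b' \<and> w \<noteq> v' \<longrightarrow> \<not> G (ed b' w)"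
      unfolding leaf_def by blast
    have "G \<in> A (v, v')" using v v' unfolding A_def S_def T_def star_def V_def by auto
    moreover have "(v, v') \<in> I" using v v' by (auto simp: I_def V_def)
    ultimately show "G \<in> (\<Union>vv\<in>I. A vv)" by blast
  qed
  have finI: "finite I" by (auto simp: I_def V_def)
  have "measure_pmf.prob (Gnp n p) ({G. leaf n G b} \<inter> {G. leaf n G b'}) \<le> measure_pmf.prob (Gnp n p) (\<Union>vv\<in>I. A vv)"
    by (rule prob_mono[OF sub])
  also have "\<dots> \<le> (\<Sum>vv\<in>I. measure_pmf.prob (Gnp n p) (A vv))"
    by (rule prob_union_bound[OF finI])
  also have "\<dots> \<le> (\<Sum>vv\<in>I. (if vv = (b', b) then p else p^2) * (1-p) ^ (2 * (n-3)))"
  proof (rule sum_mono)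
    fix vv assume vv: "vv \<in> I"
    obtain v v' where vv_eq: "vv = (v, v')" by (cases vv)
    have v: "v < n" "v \<noteq> b" and v': "v' < n" "v' \<noteq> b'" using vv by (auto simp: I_def V_def vv_eq)
    have bW: "b \<notin> V - {b, b', v}" "b' \<notin> V - {b, b', v}" "b \<notin> V - {b, b', v'}" "b' \<notin> V - {b, b', v'}" by auto
    have disj: "S vv \<inter> T vv = {}"
    proof -
      have "ed b v \<notin> star b (V - {b, b', v})" using bW by (subst mem_star) auto
      moreover have "ed b v \<notin> star b' (V - {b, b', v'})" using assms bW by (intro mem_star_other) auto
      moreover have "ed b' v' \<notin> star b' (V - {b, b', v'})" using bW by (subst mem_star) auto
      moreover have "ed b' v' \<notin> star b (V - {b, b', v})" using assms bW by (intro mem_star_other) auto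
      ultimately show ?thesis by (auto simp: S_def T_def vv_eq)
    qed
    have cardT: "card (T vv) \<ge> 2 * (n-3)"
    proof -
      have "card (T vv) = card (V - {b, b', v}) + card (V - {b, b', v'})"
        unfolding T_def vv_eq fst_conv snd_conv
        by (subst card_Un_disjoint) (use assms star_disj[of b b' "V - {b, b', v}" "V - {b, b', v'}"] in \<open>auto simp: finite_star card_star V_def\<close>)
      then show ?thesis using card_minus3[of n b b' v] card_minus3[of n b b' v'] by (simp add: V_def)
    qed
    have "measure_pmf.prob (Gnp n p) (A vv) = p ^ card (S vv) * (1-p) ^ card (T vv)"
      unfolding A_def
    proof (rule prob_config)
      show "S vv \<subseteq> pot_edges n" using assms v v' by (auto simp: S_def vv_eq intro!: ed_in)
      show "T vv \<subseteq> pot_edges n" using assms v v' star_E[of b n "V - {b, b', v}"] star_E[of b' n "V - {b, b', v'}"] by (auto simp: T_def vv_eq V_def)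
    qed (use disj assms in auto)
    also have "\<dots> \<le> (if vv = (b', b) then p else p^2) * (1-p) ^ (2 * (n-3))"
    proof (rule mult_mono)
      show "(1-p) ^ card (T vv) \<le> (1-p) ^ (2 * (n-3))"
        using cardT assms by (intro power_decreasing) auto
      show "p ^ card (S vv) \<le> (if vv = (b', b) then p else p^2)"
      proof (cases "vv = (b', b)")
        case True
        then show ?thesis by (simp add: S_def ed_sym)
      next
        case False
        have "ed b v \<noteq> ed b' v'" using False assms by (auto simp: vv_eq dest!: ed_eq_cases)
        then show ?thesis using False by (auto simp: S_def vv_eq power2_eq_square)
      qed
    qed (use assms in auto)
    finally show "measure_pmf.prob (Gnp n p) (A vv) \<le> (if vv = (b', b) then p else p^2) * (1-p) ^ (2 * (n-3))" .
  qed
  also have "\<dots> \<le> (\<Sum>vv\<in>I. (p * (if vv = (b', b) then 1 else 0) + p^2) * (1-p) ^ (2 * (n-3)))"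
    by (intro sum_mono mult_right_mono) (use assms in \<open>auto\<close>)
  also have "\<dots> = (p * (\<Sum>vv\<in>I. (if vv = (b', b) then 1 else 0)) + real (card I) * p^2) * (1-p) ^ (2 * (n-3))"
    by (simp add: sum_distrib_right sum.distrib sum_distrib_left algebra_simps)
  also have "(\<Sum>vv\<in>I. (if vv = (b', b) then 1 else 0) :: real) = 1"
    using assms finI by (simp add: I_def V_def)
  also have "card I = (n-1) * (n-1)"
    using assms by (simp add: I_def V_def card_cartesian_product card_minus1)
  finally show ?thesis by (simp add: power2_eq_square)
qed

definition isoedge :: "nat \<Rightarrow> (nat \<times> nat \<Rightarrow> bool) \<Rightarrow> bool" where
  "isoedge n G \<longleftrightarrow> (\<exists>b<n. \<exists>v<n. b \<noteq> v \<and> G (ed b v) \<and> (\<forall>w<n. w \<noteq> b \<and> w \<noteq> v \<longrightarrow> \<not> G (ed b w) \<and> \<not> G (ed v w)))"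

lemma fin_nonadj: "finite (nonadj_dom_pairs n G)"
  by (rule finite_subset[of _ "{..<n} \<times> {..<n}"]) (auto simp: nonadj_dom_pairs_def dominates_def)

lemma fin_adjdp: "finite (adj_dom_pairs n G)"
  by (rule finite_subset[of _ "{..<n} \<times> {..<n}"]) (auto simp: adj_dom_pairs_def dominates_def)

lemma iso_nonadj:
  assumes "b < n" "isol n G b"
  shows "real n - 1 \<le> real (card (nonadj_dom_pairs n G))"
proof -
  have sub: "(\<lambda>a. (a, b)) ` ({..<n} - {b}) \<subseteq> nonadj_dom_pairs n G"
  proof
    fix x assume "x \<in> (\<lambda>a. (a, b)) ` ({..<n} - {b})"
    then obtain a where a: "a < n" "a \<noteq> b" "x = (a, b)" by auto
    have nb: "\<not> G (ed b u)" if "u < n" "u \<noteq> b" for u using assms that by (auto simp: isol_def)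
    have "dominates n G a b" using a assms nb unfolding dominates_def by (auto simp: adj_ed ed_sym)
    moreover have "\<not> adj G a b" using a nb by (auto simp: adj_ed ed_sym)
    ultimately show "x \<in> nonadj_dom_pairs n G" using a by (simp add: nonadj_dom_pairs_def)
  qed
  have "card ((\<lambda>a. (a, b)) ` ({..<n} - {b})) = n - 1"
    using assms by (subst card_image) (auto simp: inj_on_def card_minus1)
  then have "n - 1 \<le> card (nonadj_dom_pairs n G)"
    using card_mono[OF fin_nonadj sub] by simp
  then show ?thesis by linarith
qed

lemma leaf_nonadj:
  assumes "\<not> isoedge n G"
  shows "card {b. b < n \<and> leaf n G b} \<le> card (nonadj_dom_pairs n G)"
proof -
  have ex: "\<exists>a. (a, b) \<in> nonadj_dom_pairs n G" if b: "b < n" "leaf n G b" for b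
  proof -
    obtain v where v: "v < n" "v \<noteq> b" "G (ed b v)" "\<forall>w<n. w \<noteq> b \<and> w \<noteq> v \<longrightarrow> \<not> G (ed b w)"
      using b unfolding leaf_def by blast
    obtain w where w: "w < n" "w \<noteq> b" "w \<noteq> v" "G (ed v w)"
      using assms b v unfolding isoedge_def by blast
    have "dominates n G w b"
      unfolding dominates_def
    proof (intro conjI allI impI)
      fix u assume u: "u < n" "adj G u b"
      then have "u = v" using v by (auto simp: adj_ed ed_sym)
      then show "adj G u w \<or> u = w" using w by (auto simp: adj_ed)
    qed (use w b in auto)
    moreover have "\<not> adj G w b" using v w by (auto simp: adj_ed ed_sym)
    ultimately show ?thesis by (auto simp: nonadj_dom_pairs_def)
  qed
  define f where "f b = (SOME a. (a, b) \<in> nonadj_dom_pairs n G)" for b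
  have "(\<lambda>b. (f b, b)) ` {b. b < n \<and> leaf n G b} \<subseteq> nonadj_dom_pairs n G"
    using ex unfolding f_def by (auto intro: someI_ex)
  moreover have "inj_on (\<lambda>b. (f b, b)) {b. b < n \<and> leaf n G b}" by (auto simp: inj_on_def)
  ultimately show ?thesis by (intro card_inj_on_le fin_nonadj) auto
qed

lemma leaf_adj:
  shows "card {b. b < n \<and> leaf n G b} \<le> card (adj_dom_pairs n G)"
proof -
  have ex: "\<exists>a. (a, b) \<in> adj_dom_pairs n G" if b: "b < n" "leaf n G b" for b
  proof -
    obtain v where v: "v < n" "v \<noteq> b" "G (ed b v)" "\<forall>w<n. w \<noteq> b \<and> w \<noteq> v \<longrightarrow> \<not> G (ed b w)"
      using b unfolding leaf_def by blast
    have "dominates n G v b"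
      unfolding dominates_def
    proof (intro conjI allI impI)
      fix u assume u: "u < n" "adj G u b"
      then have "u = v" using v by (auto simp: adj_ed ed_sym)
      then show "adj G u v \<or> u = v" by simp
    qed (use v b in auto)
    moreover have "adj G v b" using v by (auto simp: adj_ed ed_sym)
    ultimately show ?thesis by (auto simp: adj_dom_pairs_def)
  qed
  define f where "f b = (SOME a. (a, b) \<in> adj_dom_pairs n G)" for b
  have "(\<lambda>b. (f b, b)) ` {b. b < n \<and> leaf n G b} \<subseteq> adj_dom_pairs n G"
    using ex unfolding f_def by (auto intro: someI_ex)
  moreover have "inj_on (\<lambda>b. (f b, b)) {b. b < n \<and> leaf n G b}" by (auto simp: inj_on_def)
  ultimately show ?thesis by (intro card_inj_on_le fin_adjdp) auto
qed

lemma P_isoedge: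
  assumes "0 \<le> p" "p \<le> 1"
  shows "measure_pmf.prob (Gnp n p) {G. isoedge n G} \<le> real n ^ 2 * p * (1-p) ^ (2 * (n-2))"
proof -
  define I where "I = {bv \<in> {..<n} \<times> {..<n}. fst bv \<noteq> snd bv}"
  define T where "T bv = star (fst bv) ({..<n} - {fst bv, snd bv}) \<union> star (snd bv) ({..<n} - {fst bv, snd bv})" for bv
  define A where "A bv = {G. (\<forall>e\<in>{ed (fst bv) (snd bv)}. G e) \<and> (\<forall>e\<in>T bv. \<not> G e)}" for bv
  have finI: "finite I" by (auto simp: I_def)
  have sub: "{G. isoedge n G} \<subseteq> (\<Union>bv\<in>I. A bv)"
  proof
    fix G assume "G \<in> {G. isoedge n G}"
    then obtain b v where bv: "b < n" "v < n" "b \<noteq> v" "G (ed b v)" "\<forall>w<n. w \<noteq> b \<and> w \<noteq> v \<longrightarrow> \<not> G (ed b w) \<and> \<not> G (ed v w)"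
      unfolding isoedge_def by blast
    then have "G \<in> A (b, v)" by (auto simp: A_def T_def star_def)
    moreover have "(b, v) \<in> I" using bv by (auto simp: I_def)
    ultimately show "G \<in> (\<Union>bv\<in>I. A bv)" by blast
  qed
  have "measure_pmf.prob (Gnp n p) {G. isoedge n G} \<le> measure_pmf.prob (Gnp n p) (\<Union>bv\<in>I. A bv)"
    by (rule prob_mono[OF sub])
  also have "\<dots> \<le> (\<Sum>bv\<in>I. measure_pmf.prob (Gnp n p) (A bv))"
    by (rule prob_union_bound[OF finI])
  also have "\<dots> \<le> (\<Sum>bv\<in>I. p * (1-p) ^ (2 * (n-2)))"
  proof (rule sum_mono)
    fix bv assume bv: "bv \<in> I"
    obtain b v where bv_eq: "bv = (b, v)" by (cases bv)
    have bv': "b < n" "v < n" "b \<noteq> v" using bv by (auto simp: I_def bv_eq)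
    have cardT: "card (T bv) = 2 * (n-2)"
      unfolding T_def bv_eq fst_conv snd_conv using bv' star_disj[of b v "{..<n} - {b, v}" "{..<n} - {b, v}"]
      by (subst card_Un_disjoint) (auto simp: finite_star card_star card_minus2)
    have "measure_pmf.prob (Gnp n p) (A bv) = p ^ card {ed b v} * (1-p) ^ card (T bv)"
      unfolding A_def bv_eq fst_conv snd_conv
    proof (rule prob_config)
      show "T (b, v) \<subseteq> pot_edges n" using bv' star_E[of b n "{..<n} - {b, v}"] star_E[of v n "{..<n} - {b, v}"]
        by (auto simp: T_def)
      have "ed b v \<notin> star b ({..<n} - {b, v})" by (subst mem_star) auto
      moreover have "ed b v \<notin> star v ({..<n} - {b, v})" by (subst ed_sym, subst mem_star) auto
      ultimately show "{ed b v} \<inter> T (b, v) = {}" by (auto simp: T_def)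
    qed (use bv' assms in \<open>auto intro!: ed_in\<close>)
    then show "measure_pmf.prob (Gnp n p) (A bv) \<le> p * (1-p) ^ (2 * (n-2))"
      using cardT by (simp add: bv_eq)
  qed
  also have "\<dots> = real (card I) * (p * (1-p) ^ (2 * (n-2)))" by simp
  also have "\<dots> \<le> real n ^ 2 * (p * (1-p) ^ (2 * (n-2)))"
  proof (rule mult_right_mono)
    have "card I \<le> card ({..<n} \<times> {..<n})" by (rule card_mono) (auto simp: I_def)
    then show "real (card I) \<le> real n ^ 2" unfolding power2_eq_square of_nat_mult[symmetric] of_nat_le_iff by simp
  qed (use assms in auto)
  finally show ?thesis by (simp add: mult.assoc)
qed

lemma P_domcfg:
  assumes ab: "a < n" "b < n" "a \<noteq> b" and W: "W \<subseteq> {..<n}" "a \<notin> W" "b \<notin> W"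
    and F: "F \<subseteq> pot_edges n" "F \<inter> star b W = {}" "F \<inter> star a W = {}"
    and p: "0 \<le> p" "p \<le> 1"
    and X: "X \<subseteq> {G. (\<forall>e\<in>F. G e) \<and> (\<forall>w\<in>W. G (ed b w) \<longrightarrow> G (ed a w))}"
  shows "measure_pmf.prob (Gnp n p) X \<le> p ^ card F * (p^2 + (1 - p)) ^ card W"
proof -
  have finW: "finite W" using W finite_subset by blast
  have finF: "finite F" using F fin_E finite_subset by blast
  define S where "S N = F \<union> star b N \<union> star a N" for N
  define T where "T N = star b (W - N)" for N
  define A where "A N = {G. (\<forall>e\<in>S N. G e) \<and> (\<forall>e\<in>T N. \<not> G e)}" for N
  have sub: "X \<subseteq> (\<Union>N\<in>Pow W. A N)"
  proof
    fix G assume "G \<in> X"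
    then have G: "\<forall>e\<in>F. G e" "\<forall>w\<in>W. G (ed b w) \<longrightarrow> G (ed a w)" using X by auto
    define N where "N = {w\<in>W. G (ed b w)}"
    have "G \<in> A N" using G unfolding A_def S_def T_def N_def star_def by auto
    moreover have "N \<in> Pow W" by (auto simp: N_def)
    ultimately show "G \<in> (\<Union>N\<in>Pow W. A N)" by blast
  qed
  have "measure_pmf.prob (Gnp n p) X \<le> measure_pmf.prob (Gnp n p) (\<Union>N\<in>Pow W. A N)"
    by (rule prob_mono[OF sub])
  also have "\<dots> \<le> (\<Sum>N\<in>Pow W. measure_pmf.prob (Gnp n p) (A N))"
    by (rule prob_union_bound) (use finW in auto)
  also have "\<dots> = (\<Sum>N\<in>Pow W. p ^ card F * ((\<Prod>w\<in>N. p^2) * (\<Prod>w\<in>W-N. 1 - p)))"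
  proof (rule sum.cong[OF refl])
    fix N assume N: "N \<in> Pow W"
    then have NW: "N \<subseteq> W" by auto
    have finN: "finite N" using NW finW finite_subset by blast
    have d1: "star b N \<inter> star a N = {}" using star_disj[of b a N N] NW W ab by auto
    have d2: "F \<inter> star b N = {}" using F NW unfolding star_def by blast
    have d3: "F \<inter> star a N = {}" using F NW unfolding star_def by blast
    have cardS: "card (S N) = card F + 2 * card N"
    proof -
      have "card (S N) = card (F \<union> star b N) + card (star a N)"
        unfolding S_def using d1 d3 finF finN by (subst card_Un_disjoint) (auto simp: finite_star)
      also have "card (F \<union> star b N) = card F + card (star b N)"
        using d2 finF finN by (subst card_Un_disjoint) (auto simp: finite_star)
      moreover have "a \<notin> N" "b \<notin> N" using NW W by auto
      ultimately show ?thesis by (simp add: card_star)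
    qed
    have cardT: "card (T N) = card W - card N"
      unfolding T_def using W NW finN by (subst card_star) (auto simp: card_Diff_subset)
    have "measure_pmf.prob (Gnp n p) (A N) = p ^ card (S N) * (1-p) ^ card (T N)"
      unfolding A_def
    proof (rule prob_config)
      show "S N \<subseteq> pot_edges n"
      proof -
        have "N \<subseteq> {..<n}" "a \<notin> N" "b \<notin> N" using NW W by auto
        then show ?thesis unfolding S_def using F ab star_E[of b n N] star_E[of a n N] by blast
      qed
      show "T N \<subseteq> pot_edges n"
        unfolding T_def using ab star_E[of b n "W - N"] W by auto
      have e1: "F \<inter> T N = {}" using F unfolding T_def star_def by auto
      have e2: "star b N \<inter> T N = {}" unfolding T_def using W NW by (intro star_disj2) auto
      have e3: "star a N \<inter> T N = {}" unfolding T_def using star_disj[of a b N "W - N"] NW W ab by auto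
      show "S N \<inter> T N = {}" unfolding S_def using e1 e2 e3 by blast
    qed (use p in auto)
    also have "\<dots> = p ^ card F * ((\<Prod>w\<in>N. p^2) * (\<Prod>w\<in>W-N. 1 - p))"
      using cardS cardT finN finW NW by (simp add: power_add power_mult card_Diff_subset)
    finally show "measure_pmf.prob (Gnp n p) (A N) = p ^ card F * ((\<Prod>w\<in>N. p^2) * (\<Prod>w\<in>W-N. 1 - p))" .
  qed
  also have "\<dots> = p ^ card F * (\<Sum>N\<in>Pow W. (\<Prod>w\<in>N. p^2) * (\<Prod>w\<in>W-N. 1 - p))"
    by (simp only: sum_distrib_left)
  also have "(\<Sum>N\<in>Pow W. (\<Prod>w\<in>N. p^2) * (\<Prod>w\<in>W-N. 1 - p)) = (\<Prod>w\<in>W. p^2 + (1 - p))"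
    by (rule prod_add[OF finW, symmetric])
  also have "p ^ card F * (\<Prod>w\<in>W. p^2 + (1 - p)) = p ^ card F * (p^2 + (1 - p)) ^ card W" by simp
  finally show ?thesis .
qed

definition T1 :: "nat \<Rightarrow> (nat \<times> nat \<Rightarrow> bool) \<Rightarrow> nat \<Rightarrow> nat \<Rightarrow> nat \<Rightarrow> bool" where
  "T1 n G a b v \<longleftrightarrow> G (ed a b) \<and> G (ed b v) \<and> G (ed a v) \<and> (\<forall>w<n. w \<notin> {a, b, v} \<longrightarrow> G (ed b w) \<longrightarrow> G (ed a w))"

definition T2 :: "nat \<Rightarrow> (nat \<times> nat \<Rightarrow> bool) \<Rightarrow> nat \<Rightarrow> nat \<Rightarrow> nat \<Rightarrow> nat \<Rightarrow> bool" where
  "T2 n G a b u v \<longleftrightarrow> G (ed b u) \<and> G (ed b v) \<and> G (ed a u) \<and> G (ed a v) \<and> (\<forall>w<n. w \<notin> {a, b, u, v} \<longrightarrow> G (ed b w) \<longrightarrow> G (ed a w))"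

lemma pq_le1: "0 \<le> p \<Longrightarrow> p \<le> (1::real) \<Longrightarrow> 0 \<le> p^2 + (1 - p) \<and> p^2 + (1 - p) \<le> 1"
  by (auto simp: power2_eq_square) (metis mult_left_le mult.commute)

lemma P_T1:
  assumes "a < n" "b < n" "v < n" "a \<noteq> b" "a \<noteq> v" "b \<noteq> v" "0 \<le> p" "p \<le> 1"
  shows "measure_pmf.prob (Gnp n p) {G. T1 n G a b v} \<le> p ^ 3 * (p^2 + (1 - p)) ^ (n - 3)"
proof -
  define W where "W = {..<n} - {a, b, v}"
  define F where "F = {ed a b, ed b v, ed a v}"
  have "measure_pmf.prob (Gnp n p) {G. T1 n G a b v} \<le> p ^ card F * (p^2 + (1 - p)) ^ card W"
  proof (rule P_domcfg)
    show "F \<subseteq> pot_edges n" using assms by (auto simp: F_def intro!: ed_in)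
    show "F \<inter> star b W = {}"
      using assms unfolding F_def W_def
      by (auto simp: mem_star ed_sym[of a b] ed_sym[of a v] mem_star_other)
    show "F \<inter> star a W = {}"
      using assms unfolding F_def W_def
      by (auto simp: mem_star ed_sym[of b v] mem_star_other)
    show "{G. T1 n G a b v} \<subseteq> {G. (\<forall>e\<in>F. G e) \<and> (\<forall>w\<in>W. G (ed b w) \<longrightarrow> G (ed a w))}"
      by (auto simp: T1_def F_def W_def)
  qed (use assms in \<open>auto simp: W_def\<close>)
  also have "card F = 3"
  proof -
    have "ed a b \<noteq> ed b v" "ed a b \<noteq> ed a v" "ed b v \<noteq> ed a v" using assms by (auto dest!: ed_eq_cases)
    then show ?thesis unfolding F_def by simp
  qed
  also have "(p^2 + (1 - p)) ^ card W \<le> (p^2 + (1 - p)) ^ (n - 3)"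
    using pq_le1[of p] assms card_minus3[of n a b v] by (intro power_decreasing) (auto simp: W_def)
  finally show ?thesis using assms by (simp add: mult_left_mono)
qed

lemma prob_union2: "measure_pmf.prob M (A \<union> B) \<le> measure_pmf.prob M A + measure_pmf.prob M B"
  by (rule measure_subadditive) (auto simp: measure_pmf.emeasure_eq_measure)

lemma card_minus4: "card ({..<n} - {a, b, u, v}) \<ge> n - 4"
proof -
  have "card {a, b, u, v} \<le> 4" using card_length[of "[a,b,u,v]"] by simp
  moreover have "card {..<n} - card {a, b, u, v} \<le> card ({..<n} - {a, b, u, v})" by (rule diff_card_le_card_Diff) auto
  ultimately show ?thesis by simp
qed

lemma P_T2:
  assumes "a < n" "b < n" "u < n" "v < n" "a \<noteq> b" "a \<noteq> v" "b \<noteq> v" "a \<noteq> u" "b \<noteq> u" "u \<noteq> v" "0 \<le> p" "p \<le> 1"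
  shows "measure_pmf.prob (Gnp n p) {G. T2 n G a b u v} \<le> p ^ 4 * (p^2 + (1 - p)) ^ (n - 4)"
proof -
  define W where "W = {..<n} - {a, b, u, v}"
  define F where "F = {ed b u, ed b v, ed a u, ed a v}"
  have "measure_pmf.prob (Gnp n p) {G. T2 n G a b u v} \<le> p ^ card F * (p^2 + (1 - p)) ^ card W"
  proof (rule P_domcfg)
    show "F \<subseteq> pot_edges n" using assms by (auto simp: F_def intro!: ed_in)
    show "F \<inter> star b W = {}"
      using assms unfolding F_def W_def
      by (auto simp: mem_star mem_star_other)
    show "F \<inter> star a W = {}"
      using assms unfolding F_def W_def
      by (auto simp: mem_star mem_star_other)
    show "{G. T2 n G a b u v} \<subseteq> {G. (\<forall>e\<in>F. G e) \<and> (\<forall>w\<in>W. G (ed b w) \<longrightarrow> G (ed a w))}"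
      by (auto simp: T2_def F_def W_def)
  qed (use assms in \<open>auto simp: W_def\<close>)
  also have "card F = 4"
  proof -
    have "ed b u \<noteq> ed b v" "ed b u \<noteq> ed a u" "ed b u \<noteq> ed a v" "ed b v \<noteq> ed a u" "ed b v \<noteq> ed a v" "ed a u \<noteq> ed a v"
      using assms by (auto dest!: ed_eq_cases)
    then show ?thesis unfolding F_def by simp
  qed
  also have "(p^2 + (1 - p)) ^ card W \<le> (p^2 + (1 - p)) ^ (n - 4)"
    using pq_le1[of p] assms card_minus4[of n a b u v] by (intro power_decreasing) (auto simp: W_def)
  finally show ?thesis using assms by (simp add: mult_left_mono)
qed

lemma dom_cover:
  assumes "dom_pairs n G \<noteq> {}"
  shows "(\<exists>b<n. isol n G b \<or> leaf n G b) \<or>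
         (\<exists>a<n. \<exists>b<n. \<exists>v<n. a \<noteq> b \<and> a \<noteq> v \<and> b \<noteq> v \<and> T1 n G a b v) \<or>
         (\<exists>a<n. \<exists>b<n. \<exists>u<n. \<exists>v<n. a \<noteq> b \<and> a \<noteq> v \<and> b \<noteq> v \<and> a \<noteq> u \<and> b \<noteq> u \<and> u \<noteq> v \<and> T2 n G a b u v)"
proof -
  obtain a b where d: "dominates n G a b" using assms by (auto simp: dom_pairs_def)
  then have ab: "a < n" "b < n" "a \<noteq> b" and dom: "\<And>v. v < n \<Longrightarrow> adj G v b \<Longrightarrow> adj G v a \<or> v = a"
    by (auto simp: dominates_def)
  show ?thesis
  proof (cases "isol n G b \<or> leaf n G b")
    case True then show ?thesis using ab by blast
  next
    case False
    then obtain u1 where u1: "u1 < n" "u1 \<noteq> b" "G (ed b u1)" by (auto simp: isol_def)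
    then obtain u2 where u2: "u2 < n" "u2 \<noteq> b" "u2 \<noteq> u1" "G (ed b u2)" using False by (auto simp: leaf_def)
    have nb: "G (ed a w)" if "w < n" "w \<noteq> a" "w \<noteq> b" "G (ed b w)" for w
      using dom[of w] that by (auto simp: adj_ed ed_sym)
    show ?thesis
    proof (cases "G (ed a b)")
      case True
      obtain v where v: "v \<in> {u1, u2}" "v \<noteq> a" using u2 by auto
      have vv: "v < n" "v \<noteq> b" "G (ed b v)" using v u1 u2 by auto
      have "T1 n G a b v" unfolding T1_def using True vv v nb by auto
      then show ?thesis using ab vv v by blast
    next
      case False
      have "u1 \<noteq> a" "u2 \<noteq> a" using False u1 u2 by (auto simp: ed_sym)
      then have "T2 n G a b u1 u2" unfolding T2_def using u1 u2 nb by auto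
      then show ?thesis using ab u1 u2 \<open>u1 \<noteq> a\<close> \<open>u2 \<noteq> a\<close> by blast
    qed
  qed
qed

lemma P_dom:
  assumes "0 \<le> p" "p \<le> 1"
  shows "measure_pmf.prob (Gnp n p) {G. dom_pairs n G \<noteq> {}} \<le>
    real n * (1-p)^(n-1) + real n * real (n-1) * p * (1-p)^(n-2)
    + real n ^ 3 * (p ^ 3 * (p^2 + (1 - p)) ^ (n - 3)) + real n ^ 4 * (p ^ 4 * (p^2 + (1 - p)) ^ (n - 4))"
proof -
  define V where "V = {..<n}"
  define I3 where "I3 = {(a, b, v). a \<in> V \<and> b \<in> V \<and> v \<in> V \<and> a \<noteq> b \<and> a \<noteq> v \<and> b \<noteq> v}"
  define I4 where "I4 = {(a, b, u, v). a \<in> V \<and> b \<in> V \<and> u \<in> V \<and> v \<in> V \<and> a \<noteq> b \<and> a \<noteq> v \<and> b \<noteq> v \<and> a \<noteq> u \<and> b \<noteq> u \<and> u \<noteq> v}"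
  define E1 where "E1 = (\<Union>b\<in>V. {G. isol n G b} \<union> {G. leaf n G b})"
  define E3 where "E3 = (\<Union>(a, b, v)\<in>I3. {G. T1 n G a b v})"
  define E4 where "E4 = (\<Union>(a, b, u, v)\<in>I4. {G. T2 n G a b u v})"
  have fin3: "finite I3" by (rule finite_subset[of _ "V \<times> V \<times> V"]) (auto simp: I3_def V_def)
  have fin4: "finite I4" by (rule finite_subset[of _ "V \<times> V \<times> V \<times> V"]) (auto simp: I4_def V_def)
  have c3: "real (card I3) \<le> real n ^ 3"
  proof -
    have "card I3 \<le> card (V \<times> V \<times> V)" by (rule card_mono) (auto simp: I3_def V_def)
    then show ?thesis by (simp add: V_def card_cartesian_product power3_eq_cube flip: of_nat_mult)
  qed
  have c4: "real (card I4) \<le> real n ^ 4"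
  proof -
    have "card I4 \<le> card (V \<times> V \<times> V \<times> V)" by (rule card_mono) (auto simp: I4_def V_def)
    then have "card I4 \<le> n * n * n * n" by (simp add: V_def card_cartesian_product)
    then have "real (card I4) \<le> real (n * n * n * n)" by linarith
    then show ?thesis by (simp add: power4_eq_xxxx)
  qed
  have sub: "{G. dom_pairs n G \<noteq> {}} \<subseteq> E1 \<union> E3 \<union> E4"
  proof
    fix G assume "G \<in> {G. dom_pairs n G \<noteq> {}}"
    then have "dom_pairs n G \<noteq> {}" by simp
    from dom_cover[OF this] consider (c1) b where "b < n" "isol n G b \<or> leaf n G b"
      | (c2) a b v where "a < n" "b < n" "v < n" "a \<noteq> b" "a \<noteq> v" "b \<noteq> v" "T1 n G a b v"
      | (c3) a b u v where "a < n" "b < n" "u < n" "v < n" "a \<noteq> b" "a \<noteq> v" "b \<noteq> v" "a \<noteq> u" "b \<noteq> u" "u \<noteq> v" "T2 n G a b u v"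
      by blast
    then show "G \<in> E1 \<union> E3 \<union> E4"
    proof cases
      case c1 then show ?thesis by (auto simp: E1_def V_def)
    next
      case (c2 a b v)
      then have "(a, b, v) \<in> I3" by (auto simp: I3_def V_def)
      then show ?thesis using c2(7) unfolding E3_def by blast
    next
      case (c3 a b u v)
      then have "(a, b, u, v) \<in> I4" by (auto simp: I4_def V_def)
      then show ?thesis using c3(11) unfolding E4_def by blast
    qed
  qed
  have "measure_pmf.prob (Gnp n p) {G. dom_pairs n G \<noteq> {}} \<le> measure_pmf.prob (Gnp n p) (E1 \<union> E3 \<union> E4)"
    by (rule prob_mono[OF sub])
  also have "\<dots> \<le> measure_pmf.prob (Gnp n p) E1 + measure_pmf.prob (Gnp n p) E3 + measure_pmf.prob (Gnp n p) E4"
    using prob_union2[of "Gnp n p" "E1 \<union> E3" E4] prob_union2[of "Gnp n p" E1 E3] by linarith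
  also have "measure_pmf.prob (Gnp n p) E1 \<le> real n * (1-p)^(n-1) + real n * real (n-1) * p * (1-p)^(n-2)"
  proof -
    have "measure_pmf.prob (Gnp n p) E1 \<le> (\<Sum>b\<in>V. measure_pmf.prob (Gnp n p) ({G. isol n G b} \<union> {G. leaf n G b}))"
      unfolding E1_def by (rule prob_union_bound) (auto simp: V_def)
    also have "\<dots> \<le> (\<Sum>b\<in>V. (1-p)^(n-1) + real (n-1) * p * (1-p)^(n-2))"
    proof (rule sum_mono)
      fix b assume b: "b \<in> V"
      have "measure_pmf.prob (Gnp n p) ({G. isol n G b} \<union> {G. leaf n G b}) \<le>
            measure_pmf.prob (Gnp n p) {G. isol n G b} + measure_pmf.prob (Gnp n p) {G. leaf n G b}"
        by (rule prob_union2)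
      then show "measure_pmf.prob (Gnp n p) ({G. isol n G b} \<union> {G. leaf n G b}) \<le> (1-p)^(n-1) + real (n-1) * p * (1-p)^(n-2)"
        using P_iso[of b n p] P_leaf[of b n p] b assms by (simp add: V_def)
    qed
    also have "\<dots> = real (card V) * ((1-p)^(n-1) + real (n-1) * p * (1-p)^(n-2))"
      by (simp only: sum_constant)
    also have "\<dots> = real n * (1-p)^(n-1) + real n * real (n-1) * p * (1-p)^(n-2)"
      unfolding V_def card_lessThan by (simp only: distrib_left mult.assoc)
    finally show ?thesis .
  qed
  also have "measure_pmf.prob (Gnp n p) E3 \<le> real n ^ 3 * (p ^ 3 * (p^2 + (1 - p)) ^ (n - 3))"
  proof -
    have "measure_pmf.prob (Gnp n p) E3 \<le> (\<Sum>x\<in>I3. measure_pmf.prob (Gnp n p) (case x of (a, b, v) \<Rightarrow> {G. T1 n G a b v}))"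
      unfolding E3_def by (rule prob_union_bound[OF fin3])
    also have "\<dots> \<le> (\<Sum>x\<in>I3. p ^ 3 * (p^2 + (1 - p)) ^ (n - 3))"
      by (intro sum_mono) (use assms in \<open>auto simp: I3_def V_def intro!: P_T1\<close>)
    also have "\<dots> = real (card I3) * (p ^ 3 * (p^2 + (1 - p)) ^ (n - 3))" by simp
    also have "\<dots> \<le> real n ^ 3 * (p ^ 3 * (p^2 + (1 - p)) ^ (n - 3))"
      using c3 pq_le1[of p] assms by (intro mult_right_mono) auto
    finally show ?thesis .
  qed
  also have "measure_pmf.prob (Gnp n p) E4 \<le> real n ^ 4 * (p ^ 4 * (p^2 + (1 - p)) ^ (n - 4))"
  proof -
    have "measure_pmf.prob (Gnp n p) E4 \<le> (\<Sum>x\<in>I4. measure_pmf.prob (Gnp n p) (case x of (a, b, u, v) \<Rightarrow> {G. T2 n G a b u v}))"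
      unfolding E4_def by (rule prob_union_bound[OF fin4])
    also have "\<dots> \<le> (\<Sum>x\<in>I4. p ^ 4 * (p^2 + (1 - p)) ^ (n - 4))"
      by (intro sum_mono) (use assms in \<open>auto simp: I4_def V_def intro!: P_T2\<close>)
    also have "\<dots> = real (card I4) * (p ^ 4 * (p^2 + (1 - p)) ^ (n - 4))" by simp
    also have "\<dots> \<le> real n ^ 4 * (p ^ 4 * (p^2 + (1 - p)) ^ (n - 4))"
      using c4 pq_le1[of p] assms by (intro mult_right_mono) auto
    finally show ?thesis .
  qed
  finally show ?thesis by simp
qed

definition cmp :: "nat \<Rightarrow> (nat \<times> nat \<Rightarrow> bool) \<Rightarrow> (nat \<times> nat \<Rightarrow> bool)" where
  "cmp n G = (\<lambda>e. e \<in> pot_edges n \<and> \<not> G e)"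

lemma bernoulli_compl: "0 \<le> p \<Longrightarrow> p \<le> 1 \<Longrightarrow> bernoulli_pmf (1 - p) = map_pmf Not (bernoulli_pmf p)"
proof (intro pmf_eqI)
  fix i :: bool
  assume "0 \<le> p" "p \<le> 1"
  have e1: "{x::bool. \<not> x} = {False}" by auto
  have e2: "{x::bool. x} = {True}" by auto
  show "pmf (bernoulli_pmf (1 - p)) i = pmf (map_pmf Not (bernoulli_pmf p)) i"
    using \<open>0 \<le> p\<close> \<open>p \<le> 1\<close> by (cases i) (simp_all add: pmf_map vimage_def e1 e2 measure_pmf_single)
qed

lemma Gnp_compl:
  assumes "0 \<le> p" "p \<le> 1"
  shows "Gnp n (1 - p) = map_pmf (cmp n) (Gnp n p)"
proof -
  have "Gnp n (1 - p) = Pi_pmf (pot_edges n) False (\<lambda>_. map_pmf Not (bernoulli_pmf p))"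
    unfolding Gnp_def using assms by (simp add: bernoulli_compl)
  also have "\<dots> = map_pmf (\<lambda>f x. if x \<in> pot_edges n then f x else False)
                   (Pi_pmf (pot_edges n) True (\<lambda>_. map_pmf Not (bernoulli_pmf p)))"
    by (rule Pi_pmf_default_swap[symmetric]) (rule fin_E)
  also have "Pi_pmf (pot_edges n) True (\<lambda>_. map_pmf Not (bernoulli_pmf p)) =
             map_pmf (\<lambda>h. Not \<circ> h) (Pi_pmf (pot_edges n) False (\<lambda>_. bernoulli_pmf p))"
    by (rule Pi_pmf_map) (auto simp: fin_E)
  also have "map_pmf (\<lambda>f x. if x \<in> pot_edges n then f x else False) (map_pmf (\<lambda>h. Not \<circ> h) (Pi_pmf (pot_edges n) False (\<lambda>_. bernoulli_pmf p)))
     = map_pmf (cmp n) (Gnp n p)"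
    unfolding Gnp_def map_pmf_comp by (intro map_pmf_cong refl) (auto simp: cmp_def fun_eq_iff)
  finally show ?thesis .
qed

lemma adj_cmp: "v < n \<Longrightarrow> x < n \<Longrightarrow> adj (cmp n G) v x \<longleftrightarrow> v \<noteq> x \<and> \<not> adj G v x"
  by (auto simp: adj_ed cmp_def intro: ed_in)

lemma dom_cmp: "dominates n (cmp n G) a b \<longleftrightarrow> dominates n G b a"
proof (cases "a < n \<and> b < n \<and> a \<noteq> b")
  case True
  then have "(\<forall>v<n. adj (cmp n G) v b \<longrightarrow> adj (cmp n G) v a \<or> v = a) \<longleftrightarrow>
             (\<forall>v<n. adj G v a \<longrightarrow> adj G v b \<or> v = b)"
    using adj_cmp[of _ n b G] adj_cmp[of _ n a G] by (auto simp: adj_def)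
  then show ?thesis using True by (simp add: dominates_def)
qed (auto simp: dominates_def)

lemma adj_sym: "adj G a b \<longleftrightarrow> adj G b a"
  by (auto simp: adj_ed ed_sym)

lemma nonadj_cmp_iff: "(a, b) \<in> nonadj_dom_pairs n (cmp n G) \<longleftrightarrow> (b, a) \<in> adj_dom_pairs n G"
proof (cases "dominates n G b a")
  case True
  then have "a < n" "b < n" "a \<noteq> b" by (auto simp: dominates_def)
  then have "\<not> adj (cmp n G) a b \<longleftrightarrow> adj G b a" using adj_cmp[of a n b G] adj_sym[of G a b] by auto
  then show ?thesis using True by (simp add: nonadj_dom_pairs_def adj_dom_pairs_def dom_cmp)
qed (simp add: nonadj_dom_pairs_def adj_dom_pairs_def dom_cmp)

lemma adjdp_cmp_iff: "(a, b) \<in> adj_dom_pairs n (cmp n G) \<longleftrightarrow> (b, a) \<in> nonadj_dom_pairs n G"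
proof (cases "dominates n G b a")
  case True
  then have "a < n" "b < n" "a \<noteq> b" by (auto simp: dominates_def)
  then have "adj (cmp n G) a b \<longleftrightarrow> \<not> adj G b a" using adj_cmp[of a n b G] adj_sym[of G a b] by auto
  then show ?thesis using True by (simp add: nonadj_dom_pairs_def adj_dom_pairs_def dom_cmp)
qed (simp add: nonadj_dom_pairs_def adj_dom_pairs_def dom_cmp)

lemma nonadj_cmp: "nonadj_dom_pairs n (cmp n G) = (\<lambda>(a, b). (b, a)) ` adj_dom_pairs n G"
proof -
  have "(a, b) \<in> nonadj_dom_pairs n (cmp n G) \<longleftrightarrow> (b, a) \<in> adj_dom_pairs n G" for a b
    by (rule nonadj_cmp_iff)
  then show ?thesis by (auto simp: image_iff)
qed

lemma adjdp_cmp: "adj_dom_pairs n (cmp n G) = (\<lambda>(a, b). (b, a)) ` nonadj_dom_pairs n G"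
proof -
  have "(a, b) \<in> adj_dom_pairs n (cmp n G) \<longleftrightarrow> (b, a) \<in> nonadj_dom_pairs n G" for a b
    by (rule adjdp_cmp_iff)
  then show ?thesis by (auto simp: image_iff)
qed

lemma dp_cmp: "dom_pairs n (cmp n G) = {} \<longleftrightarrow> dom_pairs n G = {}"
  by (auto simp: dom_pairs_def dom_cmp)

lemma card_swap: "card ((\<lambda>(a, b). (b, a)) ` A) = card (A :: ('x \<times> 'x) set)"
  by (rule card_image) (auto simp: inj_on_def)

lemma prob_cmp:
  assumes "0 \<le> p" "p \<le> 1"
  shows "measure_pmf.prob (Gnp n p) {G. Q G} = measure_pmf.prob (Gnp n (1 - p)) {G. Q (cmp n G)}"
proof -
  have "Gnp n p = Gnp n (1 - (1 - p))" by simp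
  also have "\<dots> = map_pmf (cmp n) (Gnp n (1 - p))" using assms by (intro Gnp_compl) auto
  finally show ?thesis by (simp add: vimage_def)
qed

lemma aas_cmp:
  assumes "\<And>n. 0 \<le> p n \<and> p n \<le> 1" "\<And>n G. Q n (cmp n G) \<longleftrightarrow> R n G" "aas (\<lambda>n. 1 - p n) R"
  shows "aas p Q"
proof -
  have "measure_pmf.prob (Gnp n (p n)) {G. Q n G} = measure_pmf.prob (Gnp n (1 - p n)) {G. R n G}" for n
    using prob_cmp[of "p n" n "Q n"] assms(1)[of n] assms(2) by simp
  then show ?thesis using assms(3) by (simp add: aas_def)
qed

lemma cheb_finish:
  fixes P num mu c :: real
  assumes "P \<le> num / (mu - c)\<^sup>2" "0 \<le> P" "0 < c" "2 * c \<le> mu"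
  shows "P \<le> 4 * num / mu\<^sup>2"
proof -
  have pos: "0 < (mu - c)\<^sup>2" using assms by simp
  have "0 \<le> num / (mu - c)\<^sup>2" using assms(1,2) by linarith
  then have "0 \<le> num" using pos by (simp add: zero_le_divide_iff)
  have "(mu / 2)\<^sup>2 \<le> (mu - c)\<^sup>2" using assms by (intro power_mono) auto
  then have "mu\<^sup>2 \<le> 4 * (mu - c)\<^sup>2" by (simp add: power_divide)
  have mupos: "0 < mu\<^sup>2" using assms by simp
  have "num / (mu - c)\<^sup>2 = 4 * num / (4 * (mu - c)\<^sup>2)" by simp
  also have "\<dots> \<le> 4 * num / mu\<^sup>2"
    using \<open>mu\<^sup>2 \<le> 4 * (mu - c)\<^sup>2\<close> \<open>0 \<le> num\<close> mupos pos by (intro divide_left_mono) auto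
  finally have "num / (mu - c)\<^sup>2 \<le> 4 * num / mu\<^sup>2" .
  then show ?thesis using assms(1) by linarith
qed

lemma card_leafs: "card {i \<in> {..<n}. G \<in> {G. leaf n G i}} = card {b. b < n \<and> leaf n G b}"
  by (rule arg_cong[where f=card]) auto

lemma card_isos: "card {i \<in> {..<n}. G \<in> {G. isol n G i}} = card {b. b < n \<and> isol n G b}"
  by (rule arg_cong[where f=card]) auto

lemma inv_sq_minus1: "0 \<le> p \<Longrightarrow> p \<le> 1/2 \<Longrightarrow> 1 / (1 - p)\<^sup>2 - 1 \<le> 8 * (p::real)"
proof -
  assume p: "0 \<le> p" "p \<le> 1/2"
  then have q: "1/2 \<le> 1 - p" by simp
  have qp: "(1 - p)\<^sup>2 > 0" using q by simp
  have "1 / (1 - p)\<^sup>2 - 1 = (1 - (1 - p)\<^sup>2) / (1 - p)\<^sup>2"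
    using qp by (simp add: diff_divide_distrib)
  also have "1 - (1 - p)\<^sup>2 = p * (2 - p)" by (simp add: power2_eq_square algebra_simps)
  finally have "1 / (1 - p)\<^sup>2 - 1 = p * (2 - p) / (1 - p)\<^sup>2" .
  also have "\<dots> \<le> p * 2 / (1/4)"
  proof (rule frac_le)
    show "p * (2 - p) \<le> p * 2" using p by (simp add: mult_left_mono)
    show "1/4 \<le> (1 - p)\<^sup>2" using power_mono[OF q, of 2] by (simp add: power_divide)
  qed (use p in auto)
  finally show ?thesis by simp
qed

lemma leaf_cheb:
  assumes n: "n \<ge> 3" and p: "0 < p" "p \<le> 1/2" and C: "C > 0" "2 * C \<le> m"
    and m: "m \<le> real n * real (n-1) * p * (1-p)^(n-2)"
  shows "measure_pmf.prob (Gnp n p) {G. real (card {b. b < n \<and> leaf n G b}) < C}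
          \<le> 4 / m + 16 / (real n * real (n-1) * p) + 32 * p"
proof -
  define q where "q = 1 - p"
  define Q where "Q = q ^ (n - 3)"
  define N where "N = real n * real (n-1)"
  define mu where "mu = N * p * q * Q"
  define beta where "beta = (p + real (n-1)^2 * p^2) * Q^2"
  have q: "1/2 \<le> q" "q \<le> 1" using p by (auto simp: q_def)
  have Qpos: "0 < Q" using q by (simp add: Q_def)
  have Npos: "N > 0" using n by (simp add: N_def)
  have n2: "n - 2 = Suc (n - 3)" using n by simp
  have e1: "(1-p)^(n-2) = q * Q" unfolding n2 by (simp add: q_def Q_def)
  have e2: "(1-p)^(2 * (n-3)) = Q^2" unfolding q_def Q_def by (metis power_mult mult.commute)
  have mu_eq: "mu = (\<Sum>i\<in>{..<n}. measure_pmf.prob (Gnp n p) {G. leaf n G i})"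
    using p n by (simp add: P_leaf mu_def N_def e1 of_nat_diff)
  have mum: "m \<le> mu" using m by (simp add: mu_def N_def e1 mult.assoc)
  have Cmu: "C < mu" using C mum by linarith
  have sm: "measure_pmf.prob (Gnp n p) {G. real (card {i \<in> {..<n}. G \<in> {G. leaf n G i}}) < C}
      \<le> (mu + real (card {..<n}) * (real (card {..<n}) - 1) * beta - mu\<^sup>2) / (mu - C)\<^sup>2"
  proof (rule second_moment[OF _ mu_eq _ Cmu])
    fix i j assume "i \<in> {..<n}" "j \<in> {..<n}" "i \<noteq> j"
    then show "measure_pmf.prob (Gnp n p) ({G. leaf n G i} \<inter> {G. leaf n G j}) \<le> beta"
      using P_leaf2[of i n j p] p by (simp add: beta_def e2)
  qed auto
  have cn: "real (card {..<n}) * (real (card {..<n}) - 1) = N" using n by (simp add: N_def of_nat_diff)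
  have P1: "measure_pmf.prob (Gnp n p) {G. real (card {b. b < n \<and> leaf n G b}) < C} \<le> 4 * (mu + N * beta - mu\<^sup>2) / mu\<^sup>2"
    using sm unfolding card_leafs cn by (rule cheb_finish) (use C mum in auto)
  have "4 * (mu + N * beta - mu\<^sup>2) / mu\<^sup>2 = 4 / mu + 4 / (N * p * q^2) + 4 * (real (n-1))^2 / (N * q^2) - 4"
    using Npos Qpos p q unfolding mu_def beta_def by (simp add: field_simps power2_eq_square)
  also have "4 / mu \<le> 4 / m" using mum C by (intro divide_left_mono) auto
  also have "4 / (N * p * q^2) \<le> 16 / (N * p)"
  proof -
    have "4 / (N * p * q^2) = (4 / (N * p)) * (1 / q^2)" by simp
    also have "\<dots> \<le> (4 / (N * p)) * 4"
    proof (rule mult_left_mono)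
      have "1/4 \<le> q^2" using power_mono[OF q(1), of 2] by (simp add: power_divide)
      then show "1 / q^2 \<le> 4" using q by (simp add: divide_simps)
    qed (use Npos p in auto)
    finally show ?thesis by simp
  qed
  also have "4 * (real (n-1))^2 / (N * q^2) \<le> 4 / q^2"
  proof -
    have "(real (n-1))^2 \<le> N" unfolding N_def power2_eq_square using n by (intro mult_right_mono) auto
    then show ?thesis using Npos q by (simp add: divide_simps)
  qed
  finally have "4 * (mu + N * beta - mu\<^sup>2) / mu\<^sup>2 \<le> 4 / m + 16 / (N * p) + 4 * (1 / q^2 - 1)"
    by simp
  also have "4 * (1 / q^2 - 1) \<le> 32 * p" using inv_sq_minus1[of p] p unfolding q_def by simp
  finally show ?thesis using P1 by (simp add: N_def)
qed

lemma iso_cheb: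
  assumes n: "n \<ge> 2" and p: "0 \<le> p" "p \<le> 1/2"
    and m: "2 \<le> m" "m \<le> real n * (1-p)^(n-1)"
  shows "measure_pmf.prob (Gnp n p) {G. real (card {b. b < n \<and> isol n G b}) < 1} \<le> 4 / m + 32 * p"
proof -
  define q where "q = 1 - p"
  define Q where "Q = q ^ (n - 2)"
  define mu where "mu = real n * q * Q"
  define beta where "beta = Q^2"
  have q: "1/2 \<le> q" "q \<le> 1" using p by (auto simp: q_def)
  have Qpos: "0 < Q" using q by (simp add: Q_def)
  have npos: "real n > 0" using n by simp
  have n1: "n - 1 = Suc (n - 2)" using n by simp
  have e1: "(1-p)^(n-1) = q * Q" unfolding n1 by (simp add: q_def Q_def)
  have e1': "(1-p)^(n - Suc 0) = q * Q" using e1 by simp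
  have e2: "(1-p)^(2 * (n-2)) = Q^2" unfolding q_def Q_def by (metis power_mult mult.commute)
  have "(\<Sum>i\<in>{..<n}. measure_pmf.prob (Gnp n p) {G. isol n G i}) = (\<Sum>i\<in>{..<n}. (1-p)^(n-1))"
    by (rule sum.cong) (use P_iso p in auto)
  then have mu_eq: "mu = (\<Sum>i\<in>{..<n}. measure_pmf.prob (Gnp n p) {G. isol n G i})"
    by (simp add: mu_def e1' mult.assoc)
  have mum: "m \<le> mu" using m by (simp add: mu_def e1' mult.assoc)
  have Cmu: "1 < mu" using m mum by linarith
  have sm: "measure_pmf.prob (Gnp n p) {G. real (card {i \<in> {..<n}. G \<in> {G. isol n G i}}) < 1}
      \<le> (mu + real (card {..<n}) * (real (card {..<n}) - 1) * beta - mu\<^sup>2) / (mu - 1)\<^sup>2"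
  proof (rule second_moment[OF _ mu_eq _ Cmu])
    fix i j assume "i \<in> {..<n}" "j \<in> {..<n}" "i \<noteq> j"
    then show "measure_pmf.prob (Gnp n p) ({G. isol n G i} \<inter> {G. isol n G j}) \<le> beta"
      using P_iso2[of i n j p] p by (simp add: beta_def e2)
  qed auto
  have P1: "measure_pmf.prob (Gnp n p) {G. real (card {b. b < n \<and> isol n G b}) < 1} \<le> 4 * (mu + real n * (real n - 1) * beta - mu\<^sup>2) / mu\<^sup>2"
    using sm unfolding card_isos card_lessThan by (rule cheb_finish) (use m mum in auto)
  have "4 * (mu + real n * (real n - 1) * beta - mu\<^sup>2) / mu\<^sup>2 = 4 / mu + 4 * (real n - 1) / (real n * q^2) - 4"
    using npos Qpos p q unfolding mu_def beta_def by (simp add: field_simps power2_eq_square)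
  also have "4 / mu \<le> 4 / m" using mum m by (intro divide_left_mono) auto
  also have "4 * (real n - 1) / (real n * q^2) \<le> 4 / q^2"
    using npos q by (simp add: divide_simps)
  finally have "4 * (mu + real n * (real n - 1) * beta - mu\<^sup>2) / mu\<^sup>2 \<le> 4 / m + 4 * (1 / q^2 - 1)"
    by simp
  also have "4 * (1 / q^2 - 1) \<le> 32 * p" using inv_sq_minus1[of p] p unfolding q_def by simp
  finally show ?thesis using P1 by simp
qed

lemma pow_le_exp: "0 \<le> p \<Longrightarrow> p \<le> 1 \<Longrightarrow> (1 - p) ^ k \<le> exp (- p * real k)"
proof -
  assume p: "0 \<le> p" "p \<le> 1"
  have "1 - p \<le> exp (- p)" using exp_ge_add_one_self[of "-p"] by simp
  then have "(1 - p) ^ k \<le> exp (- p) ^ k" using p by (intro power_mono) auto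
  also have "\<dots> = exp (- p * real k)" by (simp add: exp_of_nat_mult[symmetric] mult.commute)
  finally show ?thesis .
qed

lemma pow_ge_exp: "0 \<le> p \<Longrightarrow> p \<le> 1/2 \<Longrightarrow> exp (- (p + 2 * p^2) * real k) \<le> (1 - p) ^ k"
proof -
  assume p: "0 \<le> p" "p \<le> 1/2"
  have "exp (- (p + 2 * p^2)) \<le> exp (ln (1 - p))" using ln_one_minus_pos_lower_bound[OF p] by simp
  also have "\<dots> = 1 - p" using p by simp
  finally have "exp (- (p + 2 * p^2)) ^ k \<le> (1 - p) ^ k" by (intro power_mono) auto
  then show ?thesis by (simp add: exp_of_nat_mult[symmetric] mult.commute)
qed

lemma xpow_le_exp:
  assumes "0 \<le> x" "k > 0"
  shows "x ^ k \<le> (4 * real k) ^ k * exp (x / 4)"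
proof -
  have kpos: "0 < 4 * real k" using assms by simp
  have y: "x / (4 * real k) \<le> exp (x / (4 * real k))" using exp_ge_add_one_self[of "x / (4 * real k)"] by linarith
  have "(x / (4 * real k)) ^ k \<le> exp (x / (4 * real k)) ^ k"
    using assms kpos y by (intro power_mono) auto
  also have "\<dots> = exp (x / 4)" using assms by (simp add: exp_of_nat_mult[symmetric])
  finally show ?thesis using kpos by (simp add: power_divide divide_simps mult.commute)
qed

lemma xexp_decr:
  fixes x L :: real
  assumes "1 \<le> x" "x \<le> L"
  shows "L * exp (- L) \<le> x * exp (- x)"
proof -
  define t where "t = L - x"
  have t: "0 \<le> t" unfolding t_def using assms by linarith
  have "t * 1 \<le> t * x" using assms t by (intro mult_left_mono) auto
  then have "L \<le> x * (1 + t)" by (simp add: t_def algebra_simps)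
  also have "\<dots> \<le> x * exp t" using assms by (intro mult_left_mono) auto
  finally have "L \<le> x * exp t" .
  then have "L * exp (- L) \<le> x * exp t * exp (- L)" by (intro mult_right_mono) auto
  also have "\<dots> = x * exp (- x)" by (simp add: t_def mult.assoc flip: exp_add)
  finally show ?thesis .
qed

lemma onepx_decr:
  fixes x L :: real
  assumes "0 \<le> L" "L \<le> x"
  shows "(1 + x) * exp (- x) \<le> (1 + L) * exp (- L)"
proof -
  define t where "t = x - L"
  have t: "0 \<le> t" unfolding t_def using assms by linarith
  have "0 \<le> L * t" using assms t by simp
  then have "1 + x \<le> (1 + L) * (1 + t)" by (simp add: t_def algebra_simps)
  also have "\<dots> \<le> (1 + L) * exp t" using assms by (intro mult_left_mono) auto
  finally have "(1 + x) * exp (- x) \<le> (1 + L) * exp t * exp (- x)" by (intro mult_right_mono) auto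
  also have "\<dots> = (1 + L) * exp (- L)" by (simp add: t_def mult.assoc flip: exp_add)
  finally show ?thesis .
qed

lemma prob_ge:
  assumes "{G. \<not> P G} \<subseteq> B"
  shows "1 - measure_pmf.prob M B \<le> measure_pmf.prob M {G. P G}"
proof -
  have "measure_pmf.prob M {G. P G} = measure_pmf.prob M (space (measure_pmf M) - {G. \<not> P G})"
    by (rule arg_cong[where f="measure_pmf.prob M"]) auto
  also have "\<dots> = 1 - measure_pmf.prob M {G. \<not> P G}"
    by (rule measure_pmf.prob_compl) auto
  finally show ?thesis using prob_mono[OF assms, of M] by simp
qed

lemma P1n:
  assumes "0 \<le> p" "p \<le> 1"
  shows "1 - real n ^ 2 * p \<le> measure_pmf.prob (Gnp n p) {G. adj_dom_pairs n G = {}}"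
proof -
  have sub: "{G. \<not> adj_dom_pairs n G = {}} \<subseteq> (\<Union>e\<in>pot_edges n. {G. (\<forall>e'\<in>{e}. G e') \<and> (\<forall>e'\<in>{}. \<not> G e')})"
  proof
    fix G assume "G \<in> {G. \<not> adj_dom_pairs n G = {}}"
    then obtain a b where "dominates n G a b" "adj G a b" by (auto simp: adj_dom_pairs_def)
    then have "ed a b \<in> pot_edges n" "G (ed a b)" by (auto simp: dominates_def adj_ed intro: ed_in)
    then show "G \<in> (\<Union>e\<in>pot_edges n. {G. (\<forall>e'\<in>{e}. G e') \<and> (\<forall>e'\<in>{}. \<not> G e')})" by auto
  qed
  have "measure_pmf.prob (Gnp n p) (\<Union>e\<in>pot_edges n. {G. (\<forall>e'\<in>{e}. G e') \<and> (\<forall>e'\<in>{}. \<not> G e')})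
      \<le> (\<Sum>e\<in>pot_edges n. measure_pmf.prob (Gnp n p) {G. (\<forall>e'\<in>{e}. G e') \<and> (\<forall>e'\<in>{}. \<not> G e')})"
    by (rule prob_union_bound[OF fin_E])
  also have "\<dots> = (\<Sum>e\<in>pot_edges n. p)"
  proof (rule sum.cong[OF refl])
    fix e assume "e \<in> pot_edges n"
    then show "measure_pmf.prob (Gnp n p) {G. (\<forall>e'\<in>{e}. G e') \<and> (\<forall>e'\<in>{}. \<not> G e')} = p"
      using prob_config[of "{e}" n "{}" p] assms by simp
  qed
  also have "\<dots> = real (card (pot_edges n)) * p" by simp
  also have "\<dots> \<le> real n ^ 2 * p" using card_E[of n] assms by (intro mult_right_mono) auto
  finally show ?thesis using prob_ge[OF sub, of "Gnp n p"] by linarith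
qed

lemma exp_ln_nat: "n > 0 \<Longrightarrow> exp (ln (real n)) = real n" by simp

lemma P3n:
  fixes n :: nat and p w C :: real
  defines "L \<equiv> ln (real n) + ln (ln (real n)) - w"
  defines "m \<equiv> min (real n * real (n-1) * p / exp 2) (exp w / (2 * exp 1))"
  assumes n: "n \<ge> 3" "ln (real n) > 0" and p: "0 \<le> p" "p \<le> 1/2" "2 * p^2 * real n \<le> 1"
    and x: "real n * p < L" and L: "ln (real n) \<le> L" and C: "C > 0" "2 * C \<le> m"
  shows "1 - (4 / m + 16 / (real n * real (n-1) * p) + 32 * p) \<le> measure_pmf.prob (Gnp n p) {G. C \<le> real (card (adj_dom_pairs n G))}"
proof -
  have mpos: "m > 0" using C by linarith
  have "m \<le> real n * real (n-1) * p / exp 2" unfolding m_def by simp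
  then have "p \<noteq> 0" using mpos by auto
  then have ppos: "p > 0" using p by simp
  define x where "x = real n * p"
  have x0: "0 \<le> x" using p by (simp add: x_def)
  have "exp (- (p + 2 * p^2) * real n) \<le> (1 - p) ^ n" by (rule pow_ge_exp) (use p in auto)
  also have "(1 - p) ^ n \<le> (1 - p) ^ (n - 2)" using p by (intro power_decreasing) auto
  finally have q1: "exp (- (p + 2 * p^2) * real n) \<le> (1 - p) ^ (n - 2)" .
  have "exp (- x) / exp 1 \<le> exp (- (p + 2 * p^2) * real n)"
  proof -
    have "- x - 1 \<le> - (p + 2 * p^2) * real n" using p by (simp add: x_def algebra_simps)
    then have "exp (- x - 1) \<le> exp (- (p + 2 * p^2) * real n)" by simp
    then show ?thesis by (simp add: exp_diff)
  qed
  with q1 have q2: "exp (- x) / exp 1 \<le> (1 - p) ^ (n - 2)" by linarith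
  have mu_lb: "real n * real (n-1) * p * (exp (- x) / exp 1) \<le> real n * real (n-1) * p * (1 - p) ^ (n - 2)"
    using q2 p by (intro mult_left_mono) auto
  have "m \<le> real n * real (n-1) * p * (exp (- x) / exp 1)"
  proof (cases "x \<le> 1")
    case True
    have "exp (-2) \<le> exp (- x - 1)" using True by simp
    then have "1 / exp 2 \<le> exp (- x) / exp 1" by (simp add: exp_diff exp_minus divide_simps)
    then have "real n * real (n-1) * p * (1 / exp 2) \<le> real n * real (n-1) * p * (exp (- x) / exp 1)"
      using p by (intro mult_left_mono) auto
    then have "real n * real (n-1) * p / exp 2 \<le> real n * real (n-1) * p * (exp (- x) / exp 1)" by simp
    then show ?thesis unfolding m_def by linarith
  next
    case False
    have lnpos: "ln (real n) > 0" using n by simp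
    have "L * exp (- L) \<le> x * exp (- x)" using False x by (intro xexp_decr) (auto simp: x_def)
    moreover have "exp (- L) = exp w / (real n * ln (real n))"
      using n lnpos unfolding L_def by (simp add: exp_diff exp_add exp_minus field_simps)
    ultimately have "L * (exp w / (real n * ln (real n))) \<le> x * exp (- x)" by simp
    moreover have "exp w / real n \<le> L * (exp w / (real n * ln (real n)))"
      using L lnpos n by (simp add: divide_simps)
    ultimately have e: "exp w / real n \<le> x * exp (- x)" by linarith
    have "exp w / (2 * exp 1) \<le> real (n-1) * (exp w / real n) / exp 1"
    proof -
      have "real n \<le> 2 * real (n-1)" using n by linarith
      then have "1 / 2 \<le> real (n-1) / real n" using n(1) by (auto simp: divide_simps)
      then have "exp w * (1/2) \<le> exp w * (real (n-1) / real n)" by (rule mult_left_mono) simp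
      then have "exp w * (1/2) / exp 1 \<le> exp w * (real (n-1) / real n) / exp 1" by (rule divide_right_mono) auto
      then show ?thesis by (simp add: mult.commute)
    qed
    also have "\<dots> \<le> real (n-1) * (x * exp (- x)) / exp 1"
      using e by (intro divide_right_mono mult_left_mono) auto
    also have "\<dots> = real n * real (n-1) * p * (exp (- x) / exp 1)" by (simp add: x_def)
    finally show ?thesis unfolding m_def by linarith
  qed
  with mu_lb have mm: "m \<le> real n * real (n-1) * p * (1 - p) ^ (n - 2)" by linarith
  have lc: "measure_pmf.prob (Gnp n p) {G. real (card {b. b < n \<and> leaf n G b}) < C}
          \<le> 4 / m + 16 / (real n * real (n-1) * p) + 32 * p"
    by (rule leaf_cheb[OF n(1) ppos p(2) C mm])
  have sub: "{G. \<not> C \<le> real (card (adj_dom_pairs n G))} \<subseteq> {G. real (card {b. b < n \<and> leaf n G b}) < C}"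
    using leaf_adj by (auto simp: not_le) (meson le_less_trans of_nat_le_iff)
  show ?thesis using prob_ge[OF sub, of "Gnp n p"] lc by (meson diff_left_mono order_trans)
qed

lemma qn_lb:
  assumes p: "0 \<le> p" "p \<le> 1/2" "2 * p^2 * real n \<le> 1" and k: "k \<le> n"
  shows "exp (- (real n * p)) / exp 1 \<le> (1 - p) ^ k"
proof -
  have "exp (- (p + 2 * p^2) * real n) \<le> (1 - p) ^ n" by (rule pow_ge_exp) (use p in auto)
  also have "(1 - p) ^ n \<le> (1 - p) ^ k" using p k by (intro power_decreasing) auto
  finally have q1: "exp (- (p + 2 * p^2) * real n) \<le> (1 - p) ^ k" .
  have "- (real n * p) - 1 \<le> - (p + 2 * p^2) * real n" using p by (simp add: algebra_simps)
  then have "exp (- (real n * p) - 1) \<le> exp (- (p + 2 * p^2) * real n)" by simp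
  then show ?thesis using q1 by (simp add: exp_diff)
qed

lemma mu_leaf_lb:
  fixes n :: nat and p w :: real
  defines "L \<equiv> ln (real n) + ln (ln (real n)) - w"
  assumes n: "n \<ge> 3" "ln (real n) > 0" and p: "0 \<le> p" "p \<le> 1/2" "2 * p^2 * real n \<le> 1"
    and x: "1 \<le> real n * p" "real n * p \<le> L" and L: "ln (real n) \<le> L"
  shows "exp w / (2 * exp 1) \<le> real n * real (n-1) * p * (1 - p) ^ (n - 2)"
proof -
  define x where "x = real n * p"
  have q2: "exp (- x) / exp 1 \<le> (1 - p) ^ (n - 2)" unfolding x_def by (rule qn_lb) (use p in auto)
  have lnpos: "ln (real n) > 0" using n by simp
  have "L * exp (- L) \<le> x * exp (- x)" using x by (intro xexp_decr) (auto simp: x_def)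
  moreover have "exp (- L) = exp w / (real n * ln (real n))"
    using n lnpos unfolding L_def by (simp add: exp_diff exp_add exp_minus field_simps)
  ultimately have "L * (exp w / (real n * ln (real n))) \<le> x * exp (- x)" by simp
  moreover have "exp w / real n \<le> L * (exp w / (real n * ln (real n)))"
    using L lnpos n by (simp add: divide_simps)
  ultimately have e: "exp w / real n \<le> x * exp (- x)" by linarith
  have "exp w / (2 * exp 1) \<le> real (n-1) * (exp w / real n) / exp 1"
  proof -
    have "real n \<le> 2 * real (n-1)" using n by linarith
    then have "1 / 2 \<le> real (n-1) / real n" using n(1) by (auto simp: divide_simps)
    then have "exp w * (1/2) \<le> exp w * (real (n-1) / real n)" by (rule mult_left_mono) simp
    then have "exp w * (1/2) / exp 1 \<le> exp w * (real (n-1) / real n) / exp 1" by (rule divide_right_mono) auto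
    then show ?thesis by (simp add: mult.commute)
  qed
  also have "\<dots> \<le> real (n-1) * (x * exp (- x)) / exp 1"
    using e by (intro divide_right_mono mult_left_mono) auto
  also have "\<dots> = real n * real (n-1) * p * (exp (- x) / exp 1)" by (simp add: x_def)
  also have "\<dots> \<le> real n * real (n-1) * p * (1 - p) ^ (n - 2)"
    using q2 p by (intro mult_left_mono) auto
  finally show ?thesis .
qed

lemma isoedge_small:
  assumes n: "n \<ge> 3" and p: "0 \<le> p" "p \<le> 1/2" and x: "3/4 * ln (real n) \<le> real n * p"
  shows "measure_pmf.prob (Gnp n p) {G. isoedge n G} \<le> 2 * exp 2 * exp (- ln (real n) / 8)"
proof -
  define x where "x = real n * p"
  have x0: "0 \<le> x" using p by (simp add: x_def)
  have "(1-p) ^ (2 * (n-2)) \<le> exp (- p * real (2 * (n-2)))" by (rule pow_le_exp) (use p in auto)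
  also have "- p * real (2 * (n-2)) = - 2 * x + 4 * p" using n by (simp add: x_def of_nat_diff algebra_simps)
  also have "exp (- 2 * x + 4 * p) \<le> exp (- 2 * x + 2)" using p by simp
  also have "exp (- 2 * x + 2) = exp 2 * exp (- 2 * x)" by (simp add: mult_exp_exp)
  finally have q: "(1-p) ^ (2 * (n-2)) \<le> exp 2 * exp (- 2 * x)" .
  have "x / 2 \<le> exp (x / 2)" using exp_ge_add_one_self[of "x/2"] by linarith
  then have xe: "x * exp (- (x / 2)) \<le> 2" by (simp add: exp_minus divide_simps)
  have "real n ^ 2 * p * (1-p) ^ (2 * (n-2)) \<le> real n ^ 2 * p * (exp 2 * exp (- 2 * x))"
    using q p by (intro mult_left_mono) auto
  also have "\<dots> = exp 2 * real n * (x * exp (- (x / 2))) * exp (- (3/2) * x)"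
  proof -
    have eq: "- (x / 2) + - (3/2) * x = - 2 * x" by simp
    have "exp (- 2 * x) = exp (- (x / 2)) * exp (- (3/2) * x)" by (metis mult_exp_exp eq)
    then show ?thesis by (simp add: x_def power2_eq_square)
  qed
  also have "\<dots> \<le> exp 2 * real n * 2 * exp (- (3/2) * x)"
    using xe by (intro mult_right_mono mult_left_mono) auto
  also have "exp (- (3/2) * x) \<le> exp (- (9/8) * ln (real n))" using x by (simp add: x_def mult.commute)
  also have "exp (- (9/8) * ln (real n)) = exp (- ln (real n) / 8) / real n"
  proof -
    have eq: "- (9/8) * ln (real n) = - ln (real n) / 8 + - ln (real n)" by simp
    have "exp (- (9/8) * ln (real n)) = exp (- ln (real n) / 8) * exp (- ln (real n))" by (metis mult_exp_exp eq)
    also have "exp (- ln (real n)) = 1 / real n" using n by (simp add: exp_minus inverse_eq_divide)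
    finally show ?thesis by simp
  qed
  finally have "real n ^ 2 * p * (1-p) ^ (2 * (n-2)) \<le> 2 * exp 2 * exp (- ln (real n) / 8)"
    using n by (simp add: divide_simps)
  then show ?thesis using P_isoedge[of p n] p by linarith
qed

definition B2 :: "nat \<Rightarrow> real \<Rightarrow> real" where
  "B2 n w = 4 * exp 1 * exp (- ln (real n) / 4) + 24 * ln (real n) / real n
     + 8 * exp 1 * exp (- w) + 64 / (3 * real (n-1) * ln (real n)) + 64 * ln (real n) / real n
     + 2 * exp 2 * exp (- ln (real n) / 8)"

lemma P2n:
  fixes n :: nat and p w C :: real
  defines "L \<equiv> ln (real n) + ln (ln (real n)) - w"
  assumes n: "n \<ge> 3" "4/3 \<le> ln (real n)" and p: "0 \<le> p" "p \<le> 1/2" "2 * p^2 * real n \<le> 1"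
    and x: "real n * p < L" and L: "ln (real n) \<le> L" "L \<le> 2 * ln (real n)"
    and C: "C > 0" "2 * C \<le> exp w / (2 * exp 1)" "C \<le> real n - 1"
    and n4: "2 \<le> exp (ln (real n) / 4) / exp 1"
  shows "1 - B2 n w \<le> measure_pmf.prob (Gnp n p) {G. C \<le> real (card (nonadj_dom_pairs n G))}"
proof -
  have lnpos: "ln (real n) > 0" using n by linarith
  have npos: "real n > 0" using n by simp
  have t1: "0 \<le> 4 * exp 1 * exp (- ln (real n) / 4)" by simp
  have t2: "0 \<le> 24 * ln (real n) / real n" using lnpos by simp
  have t3: "0 \<le> 8 * exp 1 * exp (- w)" by simp
  have t4: "0 \<le> 64 / (3 * real (n-1) * ln (real n))" using lnpos n by simp
  have t5: "0 \<le> 64 * ln (real n) / real n" using lnpos by simp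
  have t6: "0 \<le> 2 * exp 2 * exp (- ln (real n) / 8)" by simp
  show ?thesis
  proof (cases "real n * p \<le> 3/4 * ln (real n)")
    case True
    define m where "m = exp (ln (real n) / 4) / exp 1"
    have "exp (- (real n * p)) / exp 1 \<le> (1 - p) ^ (n - 1)" by (rule qn_lb) (use p in auto)
    moreover have "exp (- (3/4 * ln (real n))) \<le> exp (- (real n * p))" using True by simp
    ultimately have "exp (- (3/4 * ln (real n))) / exp 1 \<le> (1 - p) ^ (n - 1)"
      by (meson divide_right_mono exp_ge_zero order_trans)
    then have "real n * (exp (- (3/4 * ln (real n))) / exp 1) \<le> real n * (1 - p) ^ (n - 1)"
      by (intro mult_left_mono) auto
    moreover have "real n * (exp (- (3/4 * ln (real n))) / exp 1) = m"
    proof -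
      have eq: "ln (real n) + - (3/4 * ln (real n)) = ln (real n) / 4" by simp
      have "real n * exp (- (3/4 * ln (real n))) = exp (ln (real n)) * exp (- (3/4 * ln (real n)))" using npos by simp
      also have "\<dots> = exp (ln (real n) / 4)" by (metis mult_exp_exp eq)
      finally show ?thesis by (simp add: m_def)
    qed
    ultimately have mm: "m \<le> real n * (1 - p) ^ (n - 1)" by simp
    have ic: "measure_pmf.prob (Gnp n p) {G. real (card {b. b < n \<and> isol n G b}) < 1} \<le> 4 / m + 32 * p"
      by (rule iso_cheb) (use n p n4 mm in \<open>auto simp: m_def\<close>)
    have "4 / m = 4 * exp 1 * exp (- ln (real n) / 4)" by (simp add: m_def exp_minus divide_simps)
    moreover have "32 * p \<le> 24 * ln (real n) / real n"
    proof -
      have "p \<le> 3/4 * ln (real n) / real n" using True npos by (simp add: divide_simps mult.commute)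
      then show ?thesis by simp
    qed
    ultimately have bnd: "4 / m + 32 * p \<le> B2 n w" unfolding B2_def using t3 t4 t5 t6 by argo
    have sub: "{G. \<not> C \<le> real (card (nonadj_dom_pairs n G))} \<subseteq> {G. real (card {b. b < n \<and> isol n G b}) < 1}"
    proof (safe)
      fix G assume h: "\<not> C \<le> real (card (nonadj_dom_pairs n G))"
      show "real (card {b. b < n \<and> isol n G b}) < 1"
      proof (rule ccontr)
        assume "\<not> real (card {b. b < n \<and> isol n G b}) < 1"
        then have "{b. b < n \<and> isol n G b} \<noteq> {}" by auto
        then obtain b where "b < n" "isol n G b" by auto
        from iso_nonadj[OF this] h C show False by linarith
      qed
    qed
    show ?thesis using prob_ge[OF sub, of "Gnp n p"] ic bnd by linarith
  next
    case False
    define m where "m = exp w / (2 * exp 1)"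
    have x1: "1 \<le> real n * p" using False n by linarith
    have mm: "m \<le> real n * real (n-1) * p * (1 - p) ^ (n - 2)"
      unfolding m_def by (rule mu_leaf_lb) (use n p x1 x L lnpos in \<open>auto simp: L_def\<close>)
    have ppos: "p > 0" using x1 npos p(1) by (cases "p = 0") auto
    have lc: "measure_pmf.prob (Gnp n p) {G. real (card {b. b < n \<and> leaf n G b}) < C}
          \<le> 4 / m + 16 / (real n * real (n-1) * p) + 32 * p"
      by (rule leaf_cheb[OF n(1) ppos p(2) C(1)]) (use C mm in \<open>auto simp: m_def\<close>)
    have ie: "measure_pmf.prob (Gnp n p) {G. isoedge n G} \<le> 2 * exp 2 * exp (- ln (real n) / 8)"
      by (rule isoedge_small) (use n p False in auto)
    have b1: "4 / m = 8 * exp 1 * exp (- w)" by (simp add: m_def exp_minus divide_simps)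
    have b2: "16 / (real n * real (n-1) * p) \<le> 64 / (3 * real (n-1) * ln (real n))"
    proof -
      have n1: "real (n-1) > 0" using n by simp
      have "3 * ln (real n) \<le> 4 * (real n * p)" using False by linarith
      then have "real (n-1) * (3 * ln (real n)) \<le> real (n-1) * (4 * (real n * p))"
        using n1 by (intro mult_left_mono) auto
      then have "3 * real (n-1) * ln (real n) \<le> 4 * (real (n-1) * (real n * p))"
        by (simp add: algebra_simps)
      then have "3 * real (n-1) * ln (real n) \<le> 4 * (real n * real (n-1) * p)" by (simp add: algebra_simps)
      moreover have "0 < 3 * real (n-1) * ln (real n)" using n1 lnpos by simp
      moreover have "0 < real n * real (n-1) * p" using n1 npos ppos by simp
      ultimately have "64 / (4 * (real n * real (n-1) * p)) \<le> 64 / (3 * real (n-1) * ln (real n))"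
        by (intro divide_left_mono) auto
      then show ?thesis by (simp add: mult.commute mult.left_commute)
    qed
    have b3: "32 * p \<le> 64 * ln (real n) / real n"
    proof -
      have "real n * p \<le> 2 * ln (real n)" using x L by linarith
      then have "p \<le> 2 * ln (real n) / real n" using npos by (simp add: divide_simps mult.commute)
      then show ?thesis by simp
    qed
    have bnd: "4 / m + 16 / (real n * real (n-1) * p) + 32 * p + 2 * exp 2 * exp (- ln (real n) / 8) \<le> B2 n w"
      unfolding B2_def using b1 b2 b3 t1 t2 by argo
    have sub: "{G. \<not> C \<le> real (card (nonadj_dom_pairs n G))} \<subseteq>
               {G. real (card {b. b < n \<and> leaf n G b}) < C} \<union> {G. isoedge n G}"
    proof (safe)
      fix G assume h: "\<not> C \<le> real (card (nonadj_dom_pairs n G))" "\<not> isoedge n G"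
      show "real (card {b. b < n \<and> leaf n G b}) < C"
        using leaf_nonadj[OF h(2)] h(1) by (meson not_le of_nat_le_iff order.strict_trans2)
    qed
    have "measure_pmf.prob (Gnp n p) ({G. real (card {b. b < n \<and> leaf n G b}) < C} \<union> {G. isoedge n G})
       \<le> measure_pmf.prob (Gnp n p) {G. real (card {b. b < n \<and> leaf n G b}) < C} + measure_pmf.prob (Gnp n p) {G. isoedge n G}"
      by (rule prob_union2)
    then show ?thesis using prob_ge[OF sub, of "Gnp n p"] lc ie bnd by argo
  qed
qed

lemma pq_pow_le: "0 \<le> p \<Longrightarrow> p \<le> 1/2 \<Longrightarrow> (p^2 + (1 - p)) ^ k \<le> exp (- p * real k / 2)"
proof -
  assume p: "0 \<le> p" "p \<le> 1/2"
  have "p^2 \<le> p / 2" using p by (simp add: power2_eq_square mult_left_mono[of p "1/2" p, simplified])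
  then have "p^2 + (1 - p) \<le> 1 + (- p / 2)" by simp
  also have "\<dots> \<le> exp (- p / 2)" by (rule exp_ge_add_one_self)
  finally have "(p^2 + (1 - p)) ^ k \<le> exp (- p / 2) ^ k"
    using pq_le1[of p] p by (intro power_mono) auto
  also have "\<dots> = exp (- p * real k / 2)" by (simp add: exp_of_nat_mult[symmetric] mult.commute)
  finally show ?thesis .
qed

lemma P4n:
  fixes n :: nat and p w :: real
  defines "L \<equiv> ln (real n) + ln (ln (real n)) + w"
  assumes n: "n \<ge> 5" "1 \<le> ln (real n)" and w: "0 \<le> w" "w \<le> ln (ln (real n))" "ln (ln (real n)) \<le> ln (real n)"
    and p: "0 \<le> p" "p \<le> 1/2" and x: "L \<le> real n * p"
  shows "measure_pmf.prob (Gnp n p) {G. dom_pairs n G \<noteq> {}} \<le> 4 * exp 1 * exp (- w) + 67264 * exp 1 * exp (- ln (real n) / 4)"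
proof -
  define x where "x = real n * p"
  have npos: "real n > 0" using n by simp
  have lnpos: "ln (real n) > 0" using n by linarith
  have lln: "0 \<le> ln (ln (real n))" using n by simp
  have L0: "0 \<le> L" unfolding L_def using lnpos lln w by linarith
  have xL: "L \<le> x" using x by (simp add: x_def)
  have x0: "0 \<le> x" using L0 xL by linarith
  have a1: "real n * (1-p)^(n-1) \<le> exp 1 * (real n * exp (- x))"
  proof -
    have "(1-p)^(n-1) \<le> exp (- p * real (n-1))" by (rule pow_le_exp) (use p in auto)
    also have "- p * real (n-1) = - x + p" using n by (simp add: x_def of_nat_diff algebra_simps)
    also have "exp (- x + p) \<le> exp (- x + 1)" using p by simp
    also have "exp (- x + 1) = exp 1 * exp (- x)" by (simp add: mult_exp_exp)
    finally show ?thesis using npos by (simp add: mult_left_mono mult.left_commute)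
  qed
  have a2: "real n * real (n-1) * p * (1-p)^(n-2) \<le> exp 1 * (real n * x * exp (- x))"
  proof -
    have "(1-p)^(n-2) \<le> exp (- p * real (n-2))" by (rule pow_le_exp) (use p in auto)
    also have "- p * real (n-2) = - x + 2 * p" using n by (simp add: x_def of_nat_diff algebra_simps)
    also have "exp (- x + 2 * p) \<le> exp (- x + 1)" using p by simp
    also have "exp (- x + 1) = exp 1 * exp (- x)" by (simp add: mult_exp_exp)
    finally have q: "(1-p)^(n-2) \<le> exp 1 * exp (- x)" .
    have "real (n-1) * p \<le> x" using p n by (simp add: x_def mult_right_mono)
    then have "real n * real (n-1) * p \<le> real n * x" using npos by (simp add: mult.assoc mult_left_mono)
    then have "real n * real (n-1) * p * (1-p)^(n-2) \<le> real n * x * (exp 1 * exp (- x))"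
      by (rule mult_mono[OF _ q]) (use x0 npos p in auto)
    then show ?thesis by (simp add: algebra_simps)
  qed
  have A: "real n * (1-p)^(n-1) + real n * real (n-1) * p * (1-p)^(n-2) \<le> 4 * exp 1 * exp (- w)"
  proof -
    have s1: "real n * (1-p)^(n-1) + real n * real (n-1) * p * (1-p)^(n-2) \<le> exp 1 * real n * ((1 + x) * exp (- x))"
      using a1 a2 by (simp add: algebra_simps)
    have s2: "(1 + x) * exp (- x) \<le> (1 + L) * exp (- L)" by (rule onepx_decr[OF L0 xL])
    have s3: "exp 1 * real n * ((1 + x) * exp (- x)) \<le> exp 1 * real n * ((1 + L) * exp (- L))"
      using s2 npos by (intro mult_left_mono) auto
    have eL: "exp (- L) = exp (- w) / (real n * ln (real n))"
      using npos lnpos unfolding L_def by (simp add: exp_diff exp_add exp_minus field_simps)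
    have s4: "exp 1 * real n * ((1 + L) * exp (- L)) = exp 1 * exp (- w) * ((1 + L) / ln (real n))"
      by (subst eL) (use npos lnpos in \<open>simp add: field_simps\<close>)
    have "1 + L \<le> 4 * ln (real n)" unfolding L_def using n w by linarith
    then have "(1 + L) / ln (real n) \<le> 4" using lnpos by (simp add: divide_simps)
    then have s5: "exp 1 * exp (- w) * ((1 + L) / ln (real n)) \<le> exp 1 * exp (- w) * 4"
      by (intro mult_left_mono) auto
    show ?thesis using s1 s3 s4 s5 by argo
  qed
  have B1: "real n ^ 3 * (p ^ 3 * (p^2 + (1 - p)) ^ (n - 3)) \<le> 1728 * exp 1 * exp (- x / 4)"
  proof -
    have "(p^2 + (1 - p)) ^ (n - 3) \<le> exp (- p * real (n-3) / 2)" by (rule pq_pow_le) (use p in auto)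
    also have "- p * real (n-3) / 2 = - x / 2 + 3 * p / 2" using n by (simp add: x_def of_nat_diff field_simps)
    also have "exp (- x / 2 + 3 * p / 2) \<le> exp (- x / 2 + 1)" using p by simp
    also have "exp (- x / 2 + 1) = exp 1 * exp (- x / 2)" by (simp add: mult_exp_exp)
    finally have q: "(p^2 + (1 - p)) ^ (n - 3) \<le> exp 1 * exp (- x / 2)" .
    have "x ^ 3 \<le> (4 * real 3) ^ 3 * exp (x / 4)" by (rule xpow_le_exp) (use x0 in auto)
    then have xb: "x ^ 3 \<le> 1728 * exp (x / 4)" by simp
    have "real n ^ 3 * (p ^ 3 * (p^2 + (1 - p)) ^ (n - 3)) = x ^ 3 * (p^2 + (1 - p)) ^ (n - 3)"
      by (simp add: x_def power_mult_distrib)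
    also have "\<dots> \<le> (1728 * exp (x / 4)) * (exp 1 * exp (- x / 2))"
      using xb q x0 pq_le1[of p] p by (intro mult_mono) auto
    also have "\<dots> = 1728 * exp 1 * (exp (x / 4) * exp (- x / 2))" by simp
    also have "exp (x / 4) * exp (- x / 2) = exp (- x / 4)" by (simp add: mult_exp_exp)
    finally show ?thesis by simp
  qed
  have B2: "real n ^ 4 * (p ^ 4 * (p^2 + (1 - p)) ^ (n - 4)) \<le> 65536 * exp 1 * exp (- x / 4)"
  proof -
    have "(p^2 + (1 - p)) ^ (n - 4) \<le> exp (- p * real (n-4) / 2)" by (rule pq_pow_le) (use p in auto)
    also have "- p * real (n-4) / 2 = - x / 2 + 2 * p" using n by (simp add: x_def of_nat_diff field_simps)
    also have "exp (- x / 2 + 2 * p) \<le> exp (- x / 2 + 1)" using p by simp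
    also have "exp (- x / 2 + 1) = exp 1 * exp (- x / 2)" by (simp add: mult_exp_exp)
    finally have q: "(p^2 + (1 - p)) ^ (n - 4) \<le> exp 1 * exp (- x / 2)" .
    have "x ^ 4 \<le> (4 * real 4) ^ 4 * exp (x / 4)" by (rule xpow_le_exp) (use x0 in auto)
    then have xb: "x ^ 4 \<le> 65536 * exp (x / 4)" by simp
    have "real n ^ 4 * (p ^ 4 * (p^2 + (1 - p)) ^ (n - 4)) = x ^ 4 * (p^2 + (1 - p)) ^ (n - 4)"
      by (simp add: x_def power_mult_distrib)
    also have "\<dots> \<le> (65536 * exp (x / 4)) * (exp 1 * exp (- x / 2))"
      using xb q x0 pq_le1[of p] p by (intro mult_mono) auto
    also have "\<dots> = 65536 * exp 1 * (exp (x / 4) * exp (- x / 2))" by simp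
    also have "exp (x / 4) * exp (- x / 2) = exp (- x / 4)" by (simp add: mult_exp_exp)
    finally show ?thesis by simp
  qed
  have ex: "exp (- x / 4) \<le> exp (- ln (real n) / 4)"
    using xL lln w unfolding L_def by simp
  have "measure_pmf.prob (Gnp n p) {G. dom_pairs n G \<noteq> {}} \<le>
    real n * (1-p)^(n-1) + real n * real (n-1) * p * (1-p)^(n-2)
    + real n ^ 3 * (p ^ 3 * (p^2 + (1 - p)) ^ (n - 3)) + real n ^ 4 * (p ^ 4 * (p^2 + (1 - p)) ^ (n - 4))"
    by (rule P_dom) (use p in auto)
  moreover have "1728 * exp 1 * exp (- x / 4) + 65536 * exp 1 * exp (- x / 4) \<le> 67264 * exp 1 * exp (- ln (real n) / 4)"
    using ex by simp
  ultimately show ?thesis using A B1 B2 by argo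
qed

lemma ev1: "eventually (\<lambda>n. 4/3 \<le> ln (real n)) sequentially" by real_asymp
lemma ev2: "eventually (\<lambda>n. ln (ln (real n)) \<le> ln (real n)) sequentially" by real_asymp
lemma ev3: "eventually (\<lambda>n. 2 * ln (real n) / real n \<le> 1/2) sequentially" by real_asymp
lemma ev4: "eventually (\<lambda>n. 8 * ln (real n) ^ 2 / real n \<le> 1) sequentially" by real_asymp
lemma ev5: "eventually (\<lambda>n. 2 \<le> exp (ln (real n) / 4) / exp 1) sequentially" by real_asymp
lemma lim1: "(\<lambda>n. 4 * exp 1 * exp (- ln (real n) / 4) + 24 * ln (real n) / real n
     + 64 / (3 * real (n-1) * ln (real n)) + 64 * ln (real n) / real n
     + 2 * exp 2 * exp (- ln (real n) / 8)) \<longlonglongrightarrow> 0" by real_asymp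
lemma lim2: "filterlim (\<lambda>n. ln (ln (real n))) at_top sequentially" by real_asymp
lemma lim3: "(\<lambda>n. 67264 * exp 1 * exp (- ln (real n) / 4)) \<longlonglongrightarrow> 0" by real_asymp
lemma lim4: "(\<lambda>n. 2 * ln (real n) / real n) \<longlonglongrightarrow> 0" by real_asymp

lemma aas_intro:
  assumes "eventually (\<lambda>n. 1 - B n \<le> measure_pmf.prob (Gnp n (p n)) {G. Q n G}) sequentially"
    and "B \<longlonglongrightarrow> 0"
  shows "aas p Q"
proof -
  have l: "(\<lambda>n. 1 - B n) \<longlonglongrightarrow> 1" using tendsto_diff[OF tendsto_const assms(2), of 1] by simp
  have u: "eventually (\<lambda>n. measure_pmf.prob (Gnp n (p n)) {G. Q n G} \<le> 1) sequentially"
    by (simp add: measure_pmf.prob_le_1)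
  show ?thesis unfolding aas_def by (rule tendsto_sandwich[OF assms(1) u l tendsto_const])
qed

lemma inv_to0: "filterlim f at_top F \<Longrightarrow> ((\<lambda>x. c / f x :: real) \<longlongrightarrow> 0) F"
  using tendsto_mult[OF tendsto_const[of c] tendsto_inverse_0_at_top[of f F]] by (simp add: divide_inverse)

lemma min_at_top: "filterlim f at_top F \<Longrightarrow> filterlim g at_top F \<Longrightarrow> filterlim (\<lambda>x. min (f x) (g x) :: real) at_top F"
  unfolding filterlim_at_top by (auto intro: eventually_conj)

lemma at_top_scale: "filterlim f at_top F \<Longrightarrow> c > 0 \<Longrightarrow> filterlim (\<lambda>x. f x / c :: real) at_top F"
  unfolding filterlim_at_top
proof (intro allI)
  fix Z :: real assume h: "\<forall>Z. eventually (\<lambda>x. Z \<le> f x) F" and c: "c > 0"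
  show "eventually (\<lambda>x. Z \<le> f x / c) F"
    using h[rule_format, of "Z * c"] by eventually_elim (use c in \<open>simp add: divide_simps\<close>)
qed

lemma at_top_ev: "filterlim f at_top F \<Longrightarrow> eventually (\<lambda>x. Z \<le> (f x::real)) F"
  unfolding filterlim_at_top by blast

lemma w_lim:
  assumes "filterlim \<omega> at_top sequentially"
  shows "filterlim (\<lambda>n. min (\<omega> n) (ln (ln (real n)))) at_top sequentially"
  by (rule min_at_top[OF assms lim2])

lemma p_small:
  assumes "p \<le> (ln (real n) + ln (ln (real n)) - om) / real n" "0 \<le> om" "ln (ln (real n)) \<le> ln (real n)"
    "2 * ln (real n) / real n \<le> 1/2" "8 * ln (real n) ^ 2 / real n \<le> 1" "n > 0" "0 \<le> p"
  shows "p \<le> 2 * ln (real n) / real n" "p \<le> 1/2" "2 * p^2 * real n \<le> 1"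
proof -
  have "(ln (real n) + ln (ln (real n)) - om) / real n \<le> 2 * ln (real n) / real n"
    using assms by (intro divide_right_mono) auto
  then show p2: "p \<le> 2 * ln (real n) / real n" using assms by linarith
  then show "p \<le> 1/2" using assms by linarith
  have "p^2 \<le> (2 * ln (real n) / real n)^2" using p2 assms by (intro power_mono) auto
  then have "2 * p^2 * real n \<le> 2 * (2 * ln (real n) / real n)^2 * real n"
    using assms by (intro mult_right_mono) auto
  also have "\<dots> = 8 * ln (real n) ^ 2 / real n" using assms by (simp add: power2_eq_square field_simps)
  finally show "2 * p^2 * real n \<le> 1" using assms by linarith
qed

lemma ev_lnln: "eventually (\<lambda>n. 0 \<le> ln (ln (real n))) sequentially" by real_asymp

lemma part3:
  fixes p \<omega> :: "nat \<Rightarrow> real" and C :: real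
  assumes range: "\<And>n. 0 \<le> p n \<and> p n \<le> 1" and C: "C > 0"
    and om: "filterlim \<omega> at_top sequentially"
    and ev: "\<forall>\<^sub>F n in sequentially. p n < (ln n + ln (ln n) - \<omega> n) / n"
    and big: "filterlim (\<lambda>n. p n * real n ^ 2) at_top sequentially"
  shows "aas p (\<lambda>n G. real (card (adj_dom_pairs n G)) \<ge> C)"
proof -
  define w where "w n = min (\<omega> n) (ln (ln (real n)))" for n
  have wlim: "filterlim w at_top sequentially" unfolding w_def by (rule w_lim[OF om])
  define m where "m n = min (real n * real (n-1) * p n / exp 2) (exp (w n) / (2 * exp 1))" for n
  have nn1: "filterlim (\<lambda>n. real n * real (n-1) * p n) at_top sequentially"
  proof (rule filterlim_at_top_mono[OF at_top_scale[OF big, of 2]])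
    show "\<forall>\<^sub>F x in sequentially. p x * real x ^ 2 / 2 \<le> real x * real (x - 1) * p x"
      using eventually_ge_at_top[of 2]
    proof eventually_elim
      case (elim x)
      have "real x / 2 \<le> real (x - 1)" using elim by linarith
      then have "real x * (real x / 2) * p x \<le> real x * real (x - 1) * p x"
        using range[of x] by (intro mult_right_mono mult_left_mono) auto
      then show ?case by (simp add: power2_eq_square algebra_simps)
    qed
  qed simp
  have mlim: "filterlim m at_top sequentially"
    unfolding m_def
    by (intro min_at_top at_top_scale nn1 filterlim_compose[OF exp_at_top wlim]) auto
  define B where "B n = 4 / m n + 16 / (real n * real (n-1) * p n) + 32 * p n" for n
  have ev_p: "eventually (\<lambda>n. p n \<le> 2 * ln (real n) / real n) sequentially"
    using ev at_top_ev[OF om, of 0] ev2 ev3 ev4 eventually_ge_at_top[of 1]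
  proof eventually_elim
    case (elim n)
    show ?case by (rule p_small(1)[of "p n" n "\<omega> n"]) (use elim range[of n] in auto)
  qed
  have plim: "p \<longlonglongrightarrow> 0"
  proof (rule tendsto_sandwich[OF _ ev_p _ lim4])
    show "\<forall>\<^sub>F n in sequentially. 0 \<le> p n" using range by simp
  qed simp
  have Blim: "B \<longlonglongrightarrow> 0"
    unfolding B_def using inv_to0[OF mlim, of 4] inv_to0[OF nn1, of 16] tendsto_mult[OF tendsto_const[of 32] plim]
    by (auto intro!: tendsto_add_zero)
  show ?thesis
  proof (rule aas_intro[OF _ Blim])
    show "\<forall>\<^sub>F n in sequentially. 1 - B n \<le> measure_pmf.prob (Gnp n (p n)) {G. C \<le> real (card (adj_dom_pairs n G))}"
      using eventually_ge_at_top[of 3] ev1 at_top_ev[OF om, of 0] ev_lnln ev ev2 ev3 ev4 at_top_ev[OF mlim, of "2 * C"]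
    proof eventually_elim
      case (elim n)
      have npos: "real n > 0" using elim by simp
      have wle: "w n \<le> \<omega> n" "w n \<le> ln (ln (real n))" by (auto simp: w_def)
      have ps: "p n \<le> 2 * ln (real n) / real n" "p n \<le> 1/2" "2 * (p n)^2 * real n \<le> 1"
        using p_small[of "p n" n "\<omega> n"] elim range[of n] by auto
      have "real n * p n < ln n + ln (ln n) - \<omega> n" using elim npos by (simp add: divide_simps mult.commute)
      then have x: "real n * p n < ln (real n) + ln (ln (real n)) - w n" using wle by linarith
      have L: "ln (real n) \<le> ln (real n) + ln (ln (real n)) - w n" using wle by linarith
      show ?case unfolding B_def m_def
        by (rule P3n) (use elim range[of n] ps x L C in \<open>auto simp: m_def\<close>)
    qed
  qed
qed

lemma expw_to0: "filterlim (w :: 'a \<Rightarrow> real) at_top F \<Longrightarrow> ((\<lambda>x. exp (- w x)) \<longlongrightarrow> 0) F"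
  using inv_to0[OF filterlim_compose[OF exp_at_top], of w F 1] by (simp add: exp_minus inverse_eq_divide)

lemma part2:
  fixes p \<omega> :: "nat \<Rightarrow> real" and C :: real
  assumes range: "\<And>n. 0 \<le> p n \<and> p n \<le> 1" and C: "C > 0"
    and om: "filterlim \<omega> at_top sequentially"
    and ev: "\<forall>\<^sub>F n in sequentially. p n < (ln n + ln (ln n) - \<omega> n) / n"
  shows "aas p (\<lambda>n G. real (card (nonadj_dom_pairs n G)) \<ge> C)"
proof -
  define w where "w n = min (\<omega> n) (ln (ln (real n)))" for n
  have wlim: "filterlim w at_top sequentially" unfolding w_def by (rule w_lim[OF om])
  have elim: "filterlim (\<lambda>n. exp (w n) / (2 * exp 1)) at_top sequentially"
    by (intro at_top_scale filterlim_compose[OF exp_at_top wlim]) auto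
  define T where "T n = 4 * exp 1 * exp (- ln (real n) / 4) + 24 * ln (real n) / real n
     + 64 / (3 * real (n-1) * ln (real n)) + 64 * ln (real n) / real n
     + 2 * exp 2 * exp (- ln (real n) / 8)" for n
  have Beq: "(\<lambda>n. B2 n (w n)) = (\<lambda>n. T n + 8 * exp 1 * exp (- w n))"
    by (simp add: B2_def T_def fun_eq_iff algebra_simps)
  have Blim: "(\<lambda>n. B2 n (w n)) \<longlonglongrightarrow> 0"
    unfolding Beq using lim1 tendsto_mult[OF tendsto_const[of "8 * exp 1"] expw_to0[OF wlim]]
    by (auto simp: T_def intro!: tendsto_add_zero)
  have nlim: "filterlim (\<lambda>n. real n) at_top sequentially" by (rule filterlim_real_sequentially)
  show ?thesis
  proof (rule aas_intro[OF _ Blim])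
    show "\<forall>\<^sub>F n in sequentially. 1 - B2 n (w n) \<le> measure_pmf.prob (Gnp n (p n)) {G. C \<le> real (card (nonadj_dom_pairs n G))}"
      using eventually_ge_at_top[of 3] ev1 at_top_ev[OF om, of 0] ev_lnln ev ev2 ev3 ev4 ev5
        at_top_ev[OF elim, of "2 * C"] at_top_ev[OF nlim, of "C + 1"]
    proof eventually_elim
      case (elim n)
      have npos: "real n > 0" using elim by simp
      have wle: "w n \<le> \<omega> n" "w n \<le> ln (ln (real n))" "0 \<le> w n" using elim by (auto simp: w_def)
      have ps: "p n \<le> 2 * ln (real n) / real n" "p n \<le> 1/2" "2 * (p n)^2 * real n \<le> 1"
        using p_small[of "p n" n "\<omega> n"] elim range[of n] by auto
      have "real n * p n < ln n + ln (ln n) - \<omega> n" using elim npos by (simp add: divide_simps mult.commute)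
      then have x: "real n * p n < ln (real n) + ln (ln (real n)) - w n" using wle by linarith
      have L: "ln (real n) \<le> ln (real n) + ln (ln (real n)) - w n"
        "ln (real n) + ln (ln (real n)) - w n \<le> 2 * ln (real n)" using wle elim by linarith+
      show ?case
        by (rule P2n) (use elim range[of n] ps x L C in auto)
    qed
  qed
qed

definition B4 :: "nat \<Rightarrow> real \<Rightarrow> real" where
  "B4 n w = 4 * exp 1 * exp (- w) + 67264 * exp 1 * exp (- ln (real n) / 4)"

lemma B4_lim: "filterlim (w :: nat \<Rightarrow> real) at_top sequentially \<Longrightarrow> (\<lambda>n. B4 n (w n)) \<longlonglongrightarrow> 0"
  unfolding B4_def using lim3 tendsto_mult[OF tendsto_const[of "4 * exp 1"] expw_to0[of w sequentially]]
  by (auto intro!: tendsto_add_zero)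

lemma part4:
  fixes p \<omega>1 \<omega>2 :: "nat \<Rightarrow> real"
  assumes range: "\<And>n. 0 \<le> p n \<and> p n \<le> 1"
    and om1: "filterlim \<omega>1 at_top sequentially" and om2: "filterlim \<omega>2 at_top sequentially"
    and ev: "\<forall>\<^sub>F n in sequentially. (ln n + ln (ln n) + \<omega>1 n) / n < p n \<and>
             p n < 1 - (ln n + ln (ln n) + \<omega>2 n) / n"
  shows "aas p (\<lambda>n G. dom_pairs n G = {})"
proof -
  define w1 where "w1 n = min (\<omega>1 n) (ln (ln (real n)))" for n
  define w2 where "w2 n = min (\<omega>2 n) (ln (ln (real n)))" for n
  have w1lim: "filterlim w1 at_top sequentially" unfolding w1_def by (rule w_lim[OF om1])
  have w2lim: "filterlim w2 at_top sequentially" unfolding w2_def by (rule w_lim[OF om2])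
  have Blim: "(\<lambda>n. B4 n (w1 n) + B4 n (w2 n)) \<longlonglongrightarrow> 0"
    using B4_lim[OF w1lim] B4_lim[OF w2lim] by (rule tendsto_add_zero)
  show ?thesis
  proof (rule aas_intro[OF _ Blim])
    show "\<forall>\<^sub>F n in sequentially. 1 - (B4 n (w1 n) + B4 n (w2 n)) \<le> measure_pmf.prob (Gnp n (p n)) {G. dom_pairs n G = {}}"
      using eventually_ge_at_top[of 5] ev1 at_top_ev[OF om1, of 0] at_top_ev[OF om2, of 0] ev_lnln ev ev2
    proof eventually_elim
      case (elim n)
      have npos: "real n > 0" using elim by simp
      have w1le: "w1 n \<le> \<omega>1 n" "w1 n \<le> ln (ln (real n))" "0 \<le> w1 n" using elim by (auto simp: w1_def)
      have w2le: "w2 n \<le> \<omega>2 n" "w2 n \<le> ln (ln (real n))" "0 \<le> w2 n" using elim by (auto simp: w2_def)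
      have b1: "0 \<le> B4 n (w1 n)" "0 \<le> B4 n (w2 n)" by (auto simp: B4_def)
      show ?case
      proof (cases "p n \<le> 1/2")
        case True
        have "ln n + ln (ln n) + \<omega>1 n < real n * p n" using elim npos by (simp add: divide_simps mult.commute)
        then have x: "ln (real n) + ln (ln (real n)) + w1 n \<le> real n * p n" using w1le by linarith
        have "measure_pmf.prob (Gnp n (p n)) {G. dom_pairs n G \<noteq> {}} \<le> B4 n (w1 n)"
          unfolding B4_def by (rule P4n) (use elim range[of n] w1le x True in auto)
        then have "1 - B4 n (w1 n) \<le> measure_pmf.prob (Gnp n (p n)) {G. dom_pairs n G = {}}"
          using prob_ge[of "\<lambda>G. dom_pairs n G = {}" "{G. dom_pairs n G \<noteq> {}}" "Gnp n (p n)"] by auto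
        then show ?thesis using b1 by linarith
      next
        case False
        have "p n < 1 - (ln n + ln (ln n) + \<omega>2 n) / n" using elim by simp
        then have "ln n + ln (ln n) + \<omega>2 n < real n * (1 - p n)" using npos by (simp add: divide_simps algebra_simps)
        then have x: "ln (real n) + ln (ln (real n)) + w2 n \<le> real n * (1 - p n)" using w2le by linarith
        have "measure_pmf.prob (Gnp n (1 - p n)) {G. dom_pairs n G \<noteq> {}} \<le> B4 n (w2 n)"
          unfolding B4_def by (rule P4n) (use elim range[of n] w2le x False in auto)
        then have "1 - B4 n (w2 n) \<le> measure_pmf.prob (Gnp n (1 - p n)) {G. dom_pairs n G = {}}"
          using prob_ge[of "\<lambda>G. dom_pairs n G = {}" "{G. dom_pairs n G \<noteq> {}}" "Gnp n (1 - p n)"] by auto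
        also have "measure_pmf.prob (Gnp n (1 - p n)) {G. dom_pairs n G = {}} = measure_pmf.prob (Gnp n (p n)) {G. dom_pairs n G = {}}"
          using prob_cmp[of "p n" n "\<lambda>G. dom_pairs n G = {}"] range[of n] by (simp add: dp_cmp)
        finally show ?thesis using b1 by linarith
      qed
    qed
  qed
qed

lemma part1:
  fixes p :: "nat \<Rightarrow> real"
  assumes range: "\<And>n. 0 \<le> p n \<and> p n \<le> 1" and lim: "(\<lambda>n. p n * real n ^ 2) \<longlonglongrightarrow> 0"
  shows "aas p (\<lambda>n G. adj_dom_pairs n G = {})"
proof (rule aas_intro[OF _ lim])
  show "\<forall>\<^sub>F n in sequentially. 1 - p n * real n ^ 2 \<le> measure_pmf.prob (Gnp n (p n)) {G. adj_dom_pairs n G = {}}"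
    using P1n[of "p _"] range by (simp add: mult.commute)
qed

lemma part7:
  fixes p :: "nat \<Rightarrow> real"
  assumes range: "\<And>n. 0 \<le> p n \<and> p n \<le> 1" and lim: "(\<lambda>n. (1 - p n) * real n ^ 2) \<longlonglongrightarrow> 0"
  shows "aas p (\<lambda>n G. nonadj_dom_pairs n G = {})"
proof (rule aas_cmp[OF range])
  show "aas (\<lambda>n. 1 - p n) (\<lambda>n G. adj_dom_pairs n G = {})"
    by (rule part1) (use range lim in auto)
qed (simp add: nonadj_cmp)

lemma part5:
  fixes p \<omega> :: "nat \<Rightarrow> real" and C :: real
  assumes range: "\<And>n. 0 \<le> p n \<and> p n \<le> 1" and C: "C > 0"
    and om: "filterlim \<omega> at_top sequentially"
    and ev: "\<forall>\<^sub>F n in sequentially. p n > 1 - (ln n + ln (ln n) - \<omega> n) / n"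
  shows "aas p (\<lambda>n G. real (card (adj_dom_pairs n G)) \<ge> C)"
proof (rule aas_cmp[OF range])
  show "aas (\<lambda>n. 1 - p n) (\<lambda>n G. real (card (nonadj_dom_pairs n G)) \<ge> C)"
  proof (rule part2[OF _ C om])
    show "\<forall>\<^sub>F n in sequentially. 1 - p n < (ln n + ln (ln n) - \<omega> n) / n"
      using ev by eventually_elim linarith
  qed (use range in auto)
qed (simp add: adjdp_cmp card_swap)

lemma part6:
  fixes p \<omega> :: "nat \<Rightarrow> real" and C :: real
  assumes range: "\<And>n. 0 \<le> p n \<and> p n \<le> 1" and C: "C > 0"
    and om: "filterlim \<omega> at_top sequentially"
    and ev: "\<forall>\<^sub>F n in sequentially. p n > 1 - (ln n + ln (ln n) - \<omega> n) / n"
    and big: "filterlim (\<lambda>n. (1 - p n) * real n ^ 2) at_top sequentially"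
  shows "aas p (\<lambda>n G. real (card (nonadj_dom_pairs n G)) \<ge> C)"
proof (rule aas_cmp[OF range])
  show "aas (\<lambda>n. 1 - p n) (\<lambda>n G. real (card (adj_dom_pairs n G)) \<ge> C)"
  proof (rule part3[OF _ C om])
    show "\<forall>\<^sub>F n in sequentially. 1 - p n < (ln n + ln (ln n) - \<omega> n) / n"
      using ev by eventually_elim linarith
  qed (use range big in auto)
qed (simp add: nonadj_cmp card_swap)

theorem theorem1p4:
  fixes C :: real and p :: "nat \<Rightarrow> real"
  assumes "C > 0"
    and "\<And>n. 0 \<le> p n \<and> p n \<le> 1"
  shows
   "((\<lambda>n. p n * real n ^ 2) \<longlonglongrightarrow> 0 \<longrightarrow>
       aas p (\<lambda>n G. adj_dom_pairs n G = {}))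
  \<and> ((\<exists>\<omega> :: nat \<Rightarrow> real. filterlim \<omega> at_top sequentially \<and>
         (\<forall>\<^sub>F n in sequentially. p n < (ln n + ln (ln n) - \<omega> n) / n)) \<longrightarrow>
       aas p (\<lambda>n G. real (card (nonadj_dom_pairs n G)) \<ge> C))
  \<and> ((\<exists>\<omega> :: nat \<Rightarrow> real. filterlim \<omega> at_top sequentially \<and>
         (\<forall>\<^sub>F n in sequentially. p n < (ln n + ln (ln n) - \<omega> n) / n))
       \<and> filterlim (\<lambda>n. p n * real n ^ 2) at_top sequentially \<longrightarrow>
       aas p (\<lambda>n G. real (card (adj_dom_pairs n G)) \<ge> C))
  \<and> ((\<exists>\<omega>1 \<omega>2 :: nat \<Rightarrow> real. filterlim \<omega>1 at_top sequentially \<and>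
         filterlim \<omega>2 at_top sequentially \<and>
         (\<forall>\<^sub>F n in sequentially. (ln n + ln (ln n) + \<omega>1 n) / n < p n \<and>
             p n < 1 - (ln n + ln (ln n) + \<omega>2 n) / n)) \<longrightarrow>
       aas p (\<lambda>n G. dom_pairs n G = {}))
  \<and> ((\<exists>\<omega> :: nat \<Rightarrow> real. filterlim \<omega> at_top sequentially \<and>
         (\<forall>\<^sub>F n in sequentially. p n > 1 - (ln n + ln (ln n) - \<omega> n) / n)) \<longrightarrow>
       aas p (\<lambda>n G. real (card (adj_dom_pairs n G)) \<ge> C))
  \<and> ((\<exists>\<omega> :: nat \<Rightarrow> real. filterlim \<omega> at_top sequentially \<and>
         (\<forall>\<^sub>F n in sequentially. p n > 1 - (ln n + ln (ln n) - \<omega> n) / n))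
       \<and> filterlim (\<lambda>n. (1 - p n) * real n ^ 2) at_top sequentially \<longrightarrow>
       aas p (\<lambda>n G. real (card (nonadj_dom_pairs n G)) \<ge> C))
  \<and> ((\<lambda>n. (1 - p n) * real n ^ 2) \<longlonglongrightarrow> 0 \<longrightarrow>
       aas p (\<lambda>n G. nonadj_dom_pairs n G = {}))"
  using part1[of p, OF assms(2)] part2[of p C, OF assms(2) assms(1)] part3[of p C, OF assms(2) assms(1)]
    part4[of p, OF assms(2)] part5[of p C, OF assms(2) assms(1)] part6[of p C, OF assms(2) assms(1)] part7[of p, OF assms(2)]
  by blast

end
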